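(* Let $\mathcal Q$ be a quantaloid and $\Phi:\mathcal E\to\mathcal D$ a $\mathcal Q$-distributor. A $\mathcal Q$-category $\mathcal C$ is equivalent to the Isbell $\mathcal Q$-category $\mathsf I\Phi$ if and only if $\mathcal C$ is total and there are $\mathcal Q$-functors $F:\mathcal E\to\mathcal C$ and $G:\mathcal D\to\mathcal C$ such that (1) $\Phi(X,Y)=\mathcal C(FX,GY)$ for all $X\in\mathrm{ob}\,\mathcal E$, $Y\in\mathrm{ob}\,\mathcal D$; (2) $F$ is dense; (3) $G$ is codense.
   Context: A quantaloid is a category whose hom-sets are complete lattices with composition preserving joins in each variable; $v\le w\swarrow u\iff v\circ u\le w$ and $u\le v\searrow w\iff v\circ u\le w$. A $\mathcal Q$-category: objects with extents $|X|$ and arrows $\mathcal E(X,Y):|X|\to|Y|$ with $1_{|X|}\le\mathcal E(X,X)$, $\mathcal E(Y,Z)\circ\mathcal E(X,Y)\le\mathcal E(X,Z)$; $\mathcal Q$-functors: $|FX|=|X|$, $\mathcal E(X,Y)\le\mathcal C(FX,FY)$. $X\cong Y$ iff $|X|=|Y|$, $1\le\mathcal C(X,Y)$, $1\le\mathcal C(Y,X)$; an equivalence is a $\mathcal Q$-functor that is fully faithful and surjective up to isomorphism. Presheaves of extent $T$: $\varphi_X:|X|\to T$ with $\varphi_X\circ\mathcal E(X',X)\le\varphi_{X'}$, forming $\mathsf P\mathcal E$ with $\mathsf P\mathcal E(\varphi,\psi)=\bigwedge_X\psi_X\swarrow\varphi_X$; covariant presheaves of extent $T$: $\psi_Y:T\to|Y|$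 with $\mathcal D(Y,Y')\circ\psi_Y\le\psi_{Y'}$, forming $\mathsf P^\dagger\mathcal D$ with $\mathsf P^\dagger\mathcal D(\psi,\psi')=\bigwedge_Y\psi'_Y\searrow\psi_Y$. $\mathcal C$ is total if the Yoneda functor $Z\mapsto\mathcal C(-,Z)$ has a left adjoint ($F\dashv G$ iff $\mathcal C(FX,Y)=\mathcal E(X,GY)$). For $\varphi\in\mathsf P\mathcal E$, the weighted colimit $\varphi\star F$ is an object $Z$ with $|Z|=|\varphi|$ and $\mathcal C(Z,W)=\bigwedge_X\mathcal C(FX,W)\swarrow\varphi_X$ for all $W$; $F$ is dense if every object of $\mathcal C$ is isomorphic to $\varphi\star F$ for some $\varphi$. For a covariant presheaf $\psi$ on $\mathcal D$ of extent $T$, the weighted limit of $G$ by $\psi$ is $Z$ with $|Z|=T$ and $\mathcal C(W,Z)=\bigwedge_Y\psi_Y\searrow\mathcal C(W,GY)$ for all $W$; $G$ is codense if every object of $\mathcal C$ is isomorphic to such a weighted limit. A $\mathcal Q$-distributor $\Phi:\mathcal E\to\mathcal D$ is a family $\Phi(X,Y):|X|\to|Y|$ with $\mathcal D(Y,Y')\circ\Phi(X,Y)\circ\mathcal E(X',X)\le\Phi(X',Y')$; $\Phi_\uparrow:\mathsf P\mathcal E\to\mathsf P^\dagger\mathcal D$, $(\Phi_\uparrow\varphi)_Y=\bigwedge_X\Phi(X,Y)\swarrow\varphi_X$; $\Phi^\downarrow:\mathsf P^\dagger\mathcal D\to\mathsf P\mathcal E$, $(\Phi^\downarrow\psi)_X=\bigwedge_Y\psi_Y\searrow\Phi(X,Y)$;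 $\mathsf I\Phi$ is the full $\mathcal Q$-subcategory of $\mathsf P\mathcal E$ on those $\varphi$ with $\Phi^\downarrow\Phi_\uparrow\varphi=\varphi$. *)

theory Defs
  imports Main
begin

text \<open>Every element of
  'a is an arrow with a domain and codomain; qcomp g f is g o f (defined when
  qcod f = qdom g); qle is the order on hom-sets; qsup T T' S is the join of a set
  S of arrows T to T' (taken in the hom-set Hom T T', so empty joins are the bottom).\<close>

record ('o, 'a) quantaloid =
  qdom :: "'a \<Rightarrow> 'o"
  qcod :: "'a \<Rightarrow> 'o"
  qcomp :: "'a \<Rightarrow> 'a \<Rightarrow> 'a"
  qid :: "'o \<Rightarrow> 'a"
  qle :: "'a \<Rightarrow> 'a \<Rightarrow> bool"
  qsup :: "'o \<Rightarrow> 'o \<Rightarrow> 'a set \<Rightarrow> 'a"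

definition qhom :: "('o, 'a, 'z) quantaloid_scheme \<Rightarrow> 'o \<Rightarrow> 'o \<Rightarrow> 'a set" where
  "qhom Q T T' = {f. qdom Q f = T \<and> qcod Q f = T'}"

definition quantaloid :: "('o, 'a, 'z) quantaloid_scheme \<Rightarrow> bool" where
  "quantaloid Q \<longleftrightarrow>
     (\<forall>f g. qdom Q g = qcod Q f \<longrightarrow>
        qdom Q (qcomp Q g f) = qdom Q f \<and> qcod Q (qcomp Q g f) = qcod Q g) \<and>
     (\<forall>f g h. qdom Q g = qcod Q f \<and> qdom Q h = qcod Q g \<longrightarrow>
        qcomp Q h (qcomp Q g f) = qcomp Q (qcomp Q h g) f) \<and>
     (\<forall>T. qdom Q (qid Q T) = T \<and> qcod Q (qid Q T) = T) \<and>
     (\<forall>f. qcomp Q (qid Q (qcod Q f)) f = f \<and> qcomp Q f (qid Q (qdom Q f)) = f) \<and>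
     (\<forall>f g. qle Q f g \<longrightarrow> qdom Q f = qdom Q g \<and> qcod Q f = qcod Q g) \<and>
     (\<forall>f. qle Q f f) \<and>
     (\<forall>f g. qle Q f g \<and> qle Q g f \<longrightarrow> f = g) \<and>
     (\<forall>f g h. qle Q f g \<and> qle Q g h \<longrightarrow> qle Q f h) \<and>
     (\<forall>T T' S. S \<subseteq> qhom Q T T' \<longrightarrow>
        qsup Q T T' S \<in> qhom Q T T' \<and>
        (\<forall>s\<in>S. qle Q s (qsup Q T T' S)) \<and>
        (\<forall>u\<in>qhom Q T T'. (\<forall>s\<in>S. qle Q s u) \<longrightarrow> qle Q (qsup Q T T' S) u)) \<and>
     (\<forall>T T' T'' f S. f \<in> qhom Q T T' \<and> S \<subseteq> qhom Q T' T'' \<longrightarrow>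
        qcomp Q (qsup Q T' T'' S) f = qsup Q T T'' ((\<lambda>g. qcomp Q g f) ` S)) \<and>
     (\<forall>T T' T'' g S. g \<in> qhom Q T' T'' \<and> S \<subseteq> qhom Q T T' \<longrightarrow>
        qcomp Q g (qsup Q T T' S) = qsup Q T T'' (qcomp Q g ` S))"

definition qinf :: "('o, 'a, 'z) quantaloid_scheme \<Rightarrow> 'o \<Rightarrow> 'o \<Rightarrow> 'a set \<Rightarrow> 'a" where
  "qinf Q T T' S = qsup Q T T' {x \<in> qhom Q T T'. \<forall>s\<in>S. qle Q x s}"

definition qlimp :: "('o, 'a, 'z) quantaloid_scheme \<Rightarrow> 'a \<Rightarrow> 'a \<Rightarrow> 'a" where
  "qlimp Q v u = qsup Q (qcod Q u) (qcod Q v)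
     {w \<in> qhom Q (qcod Q u) (qcod Q v). qle Q (qcomp Q w u) v}"

definition qrimp :: "('o, 'a, 'z) quantaloid_scheme \<Rightarrow> 'a \<Rightarrow> 'a \<Rightarrow> 'a" where
  "qrimp Q v w = qsup Q (qdom Q w) (qdom Q v)
     {u \<in> qhom Q (qdom Q w) (qdom Q v). qle Q (qcomp Q v u) w}"

record ('c, 'o, 'a) qcat =
  cob :: "'c set"
  cext :: "'c \<Rightarrow> 'o"
  chom :: "'c \<Rightarrow> 'c \<Rightarrow> 'a"

definition qcategory :: "('o, 'a, 'z) quantaloid_scheme \<Rightarrow> ('c, 'o, 'a) qcat \<Rightarrow> bool" where
  "qcategory Q C \<longleftrightarrow>
     (\<forall>X\<in>cob C. \<forall>Y\<in>cob C. chom C X Y \<in> qhom Q (cext C X) (cext C Y)) \<and>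
     (\<forall>X\<in>cob C. qle Q (qid Q (cext C X)) (chom C X X)) \<and>
     (\<forall>X\<in>cob C. \<forall>Y\<in>cob C. \<forall>Z\<in>cob C.
        qle Q (qcomp Q (chom C Y Z) (chom C X Y)) (chom C X Z))"

definition qfunctor ::
  "('o, 'a, 'z) quantaloid_scheme \<Rightarrow> ('e, 'o, 'a) qcat \<Rightarrow> ('c, 'o, 'a) qcat \<Rightarrow> ('e \<Rightarrow> 'c) \<Rightarrow> bool" where
  "qfunctor Q E C F \<longleftrightarrow>
     (\<forall>X\<in>cob E. F X \<in> cob C \<and> cext C (F X) = cext E X) \<and>
     (\<forall>X\<in>cob E. \<forall>Y\<in>cob E. qle Q (chom E X Y) (chom C (F X) (F Y)))"

definition qiso :: "('o, 'a, 'z) quantaloid_scheme \<Rightarrow> ('c, 'o, 'a) qcat \<Rightarrow> 'c \<Rightarrow> 'c \<Rightarrow> bool" where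
  "qiso Q C X Y \<longleftrightarrow> X \<in> cob C \<and> Y \<in> cob C \<and> cext C X = cext C Y \<and>
     qle Q (qid Q (cext C X)) (chom C X Y) \<and> qle Q (qid Q (cext C X)) (chom C Y X)"

definition qequivalence ::
  "('o, 'a, 'z) quantaloid_scheme \<Rightarrow> ('e, 'o, 'a) qcat \<Rightarrow> ('c, 'o, 'a) qcat \<Rightarrow> ('e \<Rightarrow> 'c) \<Rightarrow> bool" where
  "qequivalence Q E C F \<longleftrightarrow> qfunctor Q E C F \<and>
     (\<forall>X\<in>cob E. \<forall>Y\<in>cob E. chom C (F X) (F Y) = chom E X Y) \<and>
     (\<forall>Z\<in>cob C. \<exists>X\<in>cob E. qiso Q C (F X) Z)"

definition qadjoint ::
  "('o, 'a, 'z) quantaloid_scheme \<Rightarrow> ('e, 'o, 'a) qcat \<Rightarrow> ('c, 'o, 'a) qcat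
     \<Rightarrow> ('e \<Rightarrow> 'c) \<Rightarrow> ('c \<Rightarrow> 'e) \<Rightarrow> bool" where
  "qadjoint Q E C F G \<longleftrightarrow> qfunctor Q E C F \<and> qfunctor Q C E G \<and>
     (\<forall>X\<in>cob E. \<forall>Y\<in>cob C. chom C (F X) Y = chom E X (G Y))"

text \<open>A presheaf on E of extent T is a function on the objects of E (fixed to
  undefined outside cob E); an object of P E is a pair (phi, T).\<close>
definition presheaf ::
  "('o, 'a, 'z) quantaloid_scheme \<Rightarrow> ('e, 'o, 'a) qcat \<Rightarrow> 'o \<Rightarrow> ('e \<Rightarrow> 'a) \<Rightarrow> bool" where
  "presheaf Q E T \<phi> \<longleftrightarrow>
     (\<forall>X\<in>cob E. \<phi> X \<in> qhom Q (cext E X) T) \<and>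
     (\<forall>X. X \<notin> cob E \<longrightarrow> \<phi> X = undefined) \<and>
     (\<forall>X\<in>cob E. \<forall>X'\<in>cob E. qle Q (qcomp Q (\<phi> X) (chom E X' X)) (\<phi> X'))"

definition covpresheaf ::
  "('o, 'a, 'z) quantaloid_scheme \<Rightarrow> ('d, 'o, 'a) qcat \<Rightarrow> 'o \<Rightarrow> ('d \<Rightarrow> 'a) \<Rightarrow> bool" where
  "covpresheaf Q D T \<psi> \<longleftrightarrow>
     (\<forall>Y\<in>cob D. \<psi> Y \<in> qhom Q T (cext D Y)) \<and>
     (\<forall>Y. Y \<notin> cob D \<longrightarrow> \<psi> Y = undefined) \<and>
     (\<forall>Y\<in>cob D. \<forall>Y'\<in>cob D. qle Q (qcomp Q (chom D Y Y') (\<psi> Y)) (\<psi> Y'))"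

definition psh_hom ::
  "('o, 'a, 'z) quantaloid_scheme \<Rightarrow> ('e, 'o, 'a) qcat
     \<Rightarrow> ('e \<Rightarrow> 'a) \<times> 'o \<Rightarrow> ('e \<Rightarrow> 'a) \<times> 'o \<Rightarrow> 'a" where
  "psh_hom Q E p q = qinf Q (snd p) (snd q) {qlimp Q (fst q X) (fst p X) | X. X \<in> cob E}"

definition PSh :: "('o, 'a, 'z) quantaloid_scheme \<Rightarrow> ('e, 'o, 'a) qcat
     \<Rightarrow> (('e \<Rightarrow> 'a) \<times> 'o, 'o, 'a) qcat" where
  "PSh Q E = \<lparr> cob = {(\<phi>, T). presheaf Q E T \<phi>}, cext = snd, chom = psh_hom Q E \<rparr>"

definition yoneda :: "('o, 'a, 'z) quantaloid_scheme \<Rightarrow> ('c, 'o, 'a) qcat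
     \<Rightarrow> 'c \<Rightarrow> ('c \<Rightarrow> 'a) \<times> 'o" where
  "yoneda Q C Z = ((\<lambda>X. if X \<in> cob C then chom C X Z else undefined), cext C Z)"

definition total :: "('o, 'a, 'z) quantaloid_scheme \<Rightarrow> ('c, 'o, 'a) qcat \<Rightarrow> bool" where
  "total Q C \<longleftrightarrow> (\<exists>L. qadjoint Q (PSh Q C) C L (yoneda Q C))"

definition is_wcolim ::
  "('o, 'a, 'z) quantaloid_scheme \<Rightarrow> ('e, 'o, 'a) qcat \<Rightarrow> ('c, 'o, 'a) qcat
     \<Rightarrow> ('e \<Rightarrow> 'c) \<Rightarrow> 'o \<Rightarrow> ('e \<Rightarrow> 'a) \<Rightarrow> 'c \<Rightarrow> bool" where
  "is_wcolim Q E C F T \<phi> Z \<longleftrightarrow> Z \<in> cob C \<and> cext C Z = T \<and>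
     (\<forall>W\<in>cob C. chom C Z W =
        qinf Q T (cext C W) {qlimp Q (chom C (F X) W) (\<phi> X) | X. X \<in> cob E})"

definition dense ::
  "('o, 'a, 'z) quantaloid_scheme \<Rightarrow> ('e, 'o, 'a) qcat \<Rightarrow> ('c, 'o, 'a) qcat \<Rightarrow> ('e \<Rightarrow> 'c) \<Rightarrow> bool" where
  "dense Q E C F \<longleftrightarrow> (\<forall>Z\<in>cob C. \<exists>T \<phi> Z'. presheaf Q E T \<phi> \<and>
       is_wcolim Q E C F T \<phi> Z' \<and> qiso Q C Z Z')"

definition is_wlim ::
  "('o, 'a, 'z) quantaloid_scheme \<Rightarrow> ('d, 'o, 'a) qcat \<Rightarrow> ('c, 'o, 'a) qcat
     \<Rightarrow> ('d \<Rightarrow> 'c) \<Rightarrow> 'o \<Rightarrow> ('d \<Rightarrow> 'a) \<Rightarrow> 'c \<Rightarrow> bool" where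
  "is_wlim Q D C G T \<psi> Z \<longleftrightarrow> Z \<in> cob C \<and> cext C Z = T \<and>
     (\<forall>W\<in>cob C. chom C W Z =
        qinf Q (cext C W) T {qrimp Q (\<psi> Y) (chom C W (G Y)) | Y. Y \<in> cob D})"

definition codense ::
  "('o, 'a, 'z) quantaloid_scheme \<Rightarrow> ('d, 'o, 'a) qcat \<Rightarrow> ('c, 'o, 'a) qcat \<Rightarrow> ('d \<Rightarrow> 'c) \<Rightarrow> bool" where
  "codense Q D C G \<longleftrightarrow> (\<forall>Z\<in>cob C. \<exists>T \<psi> Z'. covpresheaf Q D T \<psi> \<and>
       is_wlim Q D C G T \<psi> Z' \<and> qiso Q C Z Z')"

definition distributor ::
  "('o, 'a, 'z) quantaloid_scheme \<Rightarrow> ('e, 'o, 'a) qcat \<Rightarrow> ('d, 'o, 'a) qcat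
     \<Rightarrow> ('e \<Rightarrow> 'd \<Rightarrow> 'a) \<Rightarrow> bool" where
  "distributor Q E D \<Phi> \<longleftrightarrow>
     (\<forall>X\<in>cob E. \<forall>Y\<in>cob D. \<Phi> X Y \<in> qhom Q (cext E X) (cext D Y)) \<and>
     (\<forall>X\<in>cob E. \<forall>X'\<in>cob E. \<forall>Y\<in>cob D. \<forall>Y'\<in>cob D.
        qle Q (qcomp Q (chom D Y Y') (qcomp Q (\<Phi> X Y) (chom E X' X))) (\<Phi> X' Y'))"

definition dist_up ::
  "('o, 'a, 'z) quantaloid_scheme \<Rightarrow> ('e, 'o, 'a) qcat \<Rightarrow> ('d, 'o, 'a) qcat
     \<Rightarrow> ('e \<Rightarrow> 'd \<Rightarrow> 'a) \<Rightarrow> 'o \<Rightarrow> ('e \<Rightarrow> 'a) \<Rightarrow> ('d \<Rightarrow> 'a)" where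
  "dist_up Q E D \<Phi> T \<phi> = (\<lambda>Y. if Y \<in> cob D then
      qinf Q T (cext D Y) {qlimp Q (\<Phi> X Y) (\<phi> X) | X. X \<in> cob E} else undefined)"

definition dist_down ::
  "('o, 'a, 'z) quantaloid_scheme \<Rightarrow> ('e, 'o, 'a) qcat \<Rightarrow> ('d, 'o, 'a) qcat
     \<Rightarrow> ('e \<Rightarrow> 'd \<Rightarrow> 'a) \<Rightarrow> 'o \<Rightarrow> ('d \<Rightarrow> 'a) \<Rightarrow> ('e \<Rightarrow> 'a)" where
  "dist_down Q E D \<Phi> T \<psi> = (\<lambda>X. if X \<in> cob E then
      qinf Q (cext E X) T {qrimp Q (\<psi> Y) (\<Phi> X Y) | Y. Y \<in> cob D} else undefined)"

definition isbell ::
  "('o, 'a, 'z) quantaloid_scheme \<Rightarrow> ('e, 'o, 'a) qcat \<Rightarrow> ('d, 'o, 'a) qcat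
     \<Rightarrow> ('e \<Rightarrow> 'd \<Rightarrow> 'a) \<Rightarrow> (('e \<Rightarrow> 'a) \<times> 'o, 'o, 'a) qcat" where
  "isbell Q E D \<Phi> = \<lparr> cob = {(\<phi>, T). presheaf Q E T \<phi> \<and>
       dist_down Q E D \<Phi> T (dist_up Q E D \<Phi> T \<phi>) = \<phi>},
     cext = snd, chom = psh_hom Q E \<rparr>"

end

theory Submission
  imports Defs
begin


lemma setcong: "(\<And>X. X \<in> I \<Longrightarrow> f X = g X) \<Longrightarrow> {f X | X. X \<in> I} = {g X | X. X \<in> I}"
  by (rule Collect_cong) metis

locale qtl =
  fixes Q :: "('o,'a) quantaloid"
  assumes Q: "quantaloid Q"
begin

abbreviation qle' (infix "\<sqsubseteq>" 50) where "f \<sqsubseteq> g \<equiv> qle Q f g"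
abbreviation qcomp' (infixr "\<cdot>" 75) where "g \<cdot> f \<equiv> qcomp Q g f"

lemma Qax: "(\<forall>f g. qdom Q g = qcod Q f \<longrightarrow>
        qdom Q (qcomp Q g f) = qdom Q f \<and> qcod Q (qcomp Q g f) = qcod Q g) \<and>
     (\<forall>f g h. qdom Q g = qcod Q f \<and> qdom Q h = qcod Q g \<longrightarrow>
        qcomp Q h (qcomp Q g f) = qcomp Q (qcomp Q h g) f) \<and>
     (\<forall>T. qdom Q (qid Q T) = T \<and> qcod Q (qid Q T) = T) \<and>
     (\<forall>f. qcomp Q (qid Q (qcod Q f)) f = f \<and> qcomp Q f (qid Q (qdom Q f)) = f) \<and>
     (\<forall>f g. qle Q f g \<longrightarrow> qdom Q f = qdom Q g \<and> qcod Q f = qcod Q g) \<and>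
     (\<forall>f. qle Q f f) \<and>
     (\<forall>f g. qle Q f g \<and> qle Q g f \<longrightarrow> f = g) \<and>
     (\<forall>f g h. qle Q f g \<and> qle Q g h \<longrightarrow> qle Q f h) \<and>
     (\<forall>T T' S. S \<subseteq> qhom Q T T' \<longrightarrow>
        qsup Q T T' S \<in> qhom Q T T' \<and>
        (\<forall>s\<in>S. qle Q s (qsup Q T T' S)) \<and>
        (\<forall>u\<in>qhom Q T T'. (\<forall>s\<in>S. qle Q s u) \<longrightarrow> qle Q (qsup Q T T' S) u)) \<and>
     (\<forall>T T' T'' f S. f \<in> qhom Q T T' \<and> S \<subseteq> qhom Q T' T'' \<longrightarrow>
        qcomp Q (qsup Q T' T'' S) f = qsup Q T T'' ((\<lambda>g. qcomp Q g f) ` S)) \<and>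
     (\<forall>T T' T'' g S. g \<in> qhom Q T' T'' \<and> S \<subseteq> qhom Q T T' \<longrightarrow>
        qcomp Q g (qsup Q T T' S) = qsup Q T T'' (qcomp Q g ` S))"
  using Q unfolding quantaloid_def .

lemmas ax = Qax[THEN conjunct1] Qax[THEN conjunct2, THEN conjunct1]
  Qax[THEN conjunct2, THEN conjunct2, THEN conjunct1]
  Qax[THEN conjunct2, THEN conjunct2, THEN conjunct2, THEN conjunct1]
  Qax[THEN conjunct2, THEN conjunct2, THEN conjunct2, THEN conjunct2, THEN conjunct1]
  Qax[THEN conjunct2, THEN conjunct2, THEN conjunct2, THEN conjunct2, THEN conjunct2, THEN conjunct1]
  Qax[THEN conjunct2, THEN conjunct2, THEN conjunct2, THEN conjunct2, THEN conjunct2, THEN conjunct2, THEN conjunct1]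
  Qax[THEN conjunct2, THEN conjunct2, THEN conjunct2, THEN conjunct2, THEN conjunct2, THEN conjunct2, THEN conjunct2, THEN conjunct1]
  Qax[THEN conjunct2, THEN conjunct2, THEN conjunct2, THEN conjunct2, THEN conjunct2, THEN conjunct2, THEN conjunct2, THEN conjunct2, THEN conjunct1]
  Qax[THEN conjunct2, THEN conjunct2, THEN conjunct2, THEN conjunct2, THEN conjunct2, THEN conjunct2, THEN conjunct2, THEN conjunct2, THEN conjunct2, THEN conjunct1]
  Qax[THEN conjunct2, THEN conjunct2, THEN conjunct2, THEN conjunct2, THEN conjunct2, THEN conjunct2, THEN conjunct2, THEN conjunct2, THEN conjunct2, THEN conjunct2]

lemma hom_iff: "f \<in> qhom Q A B \<longleftrightarrow> qdom Q f = A \<and> qcod Q f = B"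
  by (simp add: qhom_def)

lemma comp_hom: "f \<in> qhom Q A B \<Longrightarrow> g \<in> qhom Q B C \<Longrightarrow> g \<cdot> f \<in> qhom Q A C"
  using ax(1) unfolding qhom_def by auto

lemma assoc: "f \<in> qhom Q A B \<Longrightarrow> g \<in> qhom Q B C \<Longrightarrow> h \<in> qhom Q C D \<Longrightarrow> h \<cdot> (g \<cdot> f) = (h \<cdot> g) \<cdot> f"
  using ax(2) unfolding qhom_def by auto

lemma id_hom: "qid Q A \<in> qhom Q A A"
  using ax(3) unfolding qhom_def by auto

lemma id_l: "f \<in> qhom Q A B \<Longrightarrow> qid Q B \<cdot> f = f"
  using ax(4) unfolding qhom_def by auto

lemma id_r: "f \<in> qhom Q A B \<Longrightarrow> f \<cdot> qid Q A = f"
  using ax(4) unfolding qhom_def by auto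

lemma le_refl: "f \<sqsubseteq> f"
  using ax(6) by auto

lemma le_trans: "f \<sqsubseteq> g \<Longrightarrow> g \<sqsubseteq> h \<Longrightarrow> f \<sqsubseteq> h"
  using ax(8) by blast

declare le_trans[trans]

lemma le_antisym: "f \<sqsubseteq> g \<Longrightarrow> g \<sqsubseteq> f \<Longrightarrow> f = g"
  using ax(7) by blast

lemma le_hom: "f \<sqsubseteq> g \<Longrightarrow> g \<in> qhom Q A B \<Longrightarrow> f \<in> qhom Q A B"
  using ax(5) unfolding qhom_def by auto

lemma le_hom2: "f \<sqsubseteq> g \<Longrightarrow> f \<in> qhom Q A B \<Longrightarrow> g \<in> qhom Q A B"
  using ax(5) unfolding qhom_def by auto

lemma sup_hom: "S \<subseteq> qhom Q A B \<Longrightarrow> qsup Q A B S \<in> qhom Q A B"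
  using ax(9) by blast

lemma sup_upper: "S \<subseteq> qhom Q A B \<Longrightarrow> s \<in> S \<Longrightarrow> s \<sqsubseteq> qsup Q A B S"
  using ax(9) by blast

lemma sup_least: "S \<subseteq> qhom Q A B \<Longrightarrow> u \<in> qhom Q A B \<Longrightarrow> (\<And>s. s \<in> S \<Longrightarrow> s \<sqsubseteq> u) \<Longrightarrow> qsup Q A B S \<sqsubseteq> u"
  using ax(9) by blast

lemma comp_sup_r: "f \<in> qhom Q A B \<Longrightarrow> S \<subseteq> qhom Q B C \<Longrightarrow> qsup Q B C S \<cdot> f = qsup Q A C ((\<lambda>g. g \<cdot> f) ` S)"
  using ax(10) by blast

lemma comp_sup_l: "g \<in> qhom Q B C \<Longrightarrow> S \<subseteq> qhom Q A B \<Longrightarrow> g \<cdot> qsup Q A B S = qsup Q A C ((\<lambda>f. g \<cdot> f) ` S)"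
  using ax(11) by blast

lemma sup_pair: assumes "f \<sqsubseteq> f'" "f' \<in> qhom Q A B" shows "qsup Q A B {f, f'} = f'"
proof -
  have f: "f \<in> qhom Q A B" using assms le_hom by blast
  have "{f,f'} \<subseteq> qhom Q A B" using f assms by auto
  note S = this
  show ?thesis
  proof (rule le_antisym)
    show "qsup Q A B {f, f'} \<sqsubseteq> f'"
      by (rule sup_least[OF S assms(2)]) (use assms(1) le_refl in auto)
    show "f' \<sqsubseteq> qsup Q A B {f, f'}" by (rule sup_upper[OF S]) simp
  qed
qed

lemma mono_l: assumes "f \<sqsubseteq> f'" "f' \<in> qhom Q A B" "g \<in> qhom Q B C" shows "g \<cdot> f \<sqsubseteq> g \<cdot> f'"
proof -
  have f: "f \<in> qhom Q A B" using assms le_hom by blast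
  have S: "{f,f'} \<subseteq> qhom Q A B" using f assms by auto
  have "g \<cdot> f' = qsup Q A C ((\<lambda>f. g \<cdot> f) ` {f,f'})"
    using comp_sup_l[OF assms(3) S] sup_pair[OF assms(1,2)] by simp
  moreover have "(\<lambda>f. g \<cdot> f) ` {f,f'} \<subseteq> qhom Q A C" using S assms(3) comp_hom by blast
  moreover have "g \<cdot> f \<in> (\<lambda>f. g \<cdot> f) ` {f,f'}" by simp
  ultimately show ?thesis using sup_upper by metis
qed

lemma mono_r: assumes "g \<sqsubseteq> g'" "g' \<in> qhom Q B C" "f \<in> qhom Q A B" shows "g \<cdot> f \<sqsubseteq> g' \<cdot> f"
proof -
  have g: "g \<in> qhom Q B C" using assms le_hom by blast
  have S: "{g,g'} \<subseteq> qhom Q B C" using g assms by auto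
  have "g' \<cdot> f = qsup Q A C ((\<lambda>g. g \<cdot> f) ` {g,g'})"
    using comp_sup_r[OF assms(3) S] sup_pair[OF assms(1,2)] by simp
  moreover have "(\<lambda>g. g \<cdot> f) ` {g,g'} \<subseteq> qhom Q A C" using S assms(3) comp_hom by blast
  moreover have "g \<cdot> f \<in> (\<lambda>g. g \<cdot> f) ` {g,g'}" by simp
  ultimately show ?thesis using sup_upper by metis
qed

lemma mono2: assumes "f \<sqsubseteq> f'" "f' \<in> qhom Q A B" "g \<sqsubseteq> g'" "g' \<in> qhom Q B C"
  shows "g \<cdot> f \<sqsubseteq> g' \<cdot> f'"
proof -
  have "g \<cdot> f \<sqsubseteq> g \<cdot> f'" using mono_l assms le_hom by blast
  moreover have "g \<cdot> f' \<sqsubseteq> g' \<cdot> f'" using mono_r assms by blast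
  ultimately show ?thesis using le_trans by blast
qed

lemma inf_hom: "qinf Q A B S \<in> qhom Q A B"
  unfolding qinf_def by (rule sup_hom) auto

lemma inf_lower: "S \<subseteq> qhom Q A B \<Longrightarrow> s \<in> S \<Longrightarrow> qinf Q A B S \<sqsubseteq> s"
  unfolding qinf_def by (rule sup_least) auto

lemma inf_greatest: "u \<in> qhom Q A B \<Longrightarrow> (\<And>s. s \<in> S \<Longrightarrow> u \<sqsubseteq> s) \<Longrightarrow> u \<sqsubseteq> qinf Q A B S"
  unfolding qinf_def by (rule sup_upper) auto

lemma limp_hom: assumes "u \<in> qhom Q A B" "v \<in> qhom Q A C" shows "qlimp Q v u \<in> qhom Q B C"
proof -
  have "qcod Q u = B" "qcod Q v = C" using assms hom_iff by auto
  then show ?thesis unfolding qlimp_def using sup_hom[of "{w \<in> qhom Q B C. w \<cdot> u \<sqsubseteq> v}" B C] by auto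
qed

lemma limp_iff: assumes "u \<in> qhom Q A B" "v \<in> qhom Q A C" "w \<in> qhom Q B C"
  shows "w \<sqsubseteq> qlimp Q v u \<longleftrightarrow> w \<cdot> u \<sqsubseteq> v"
proof -
  have cu: "qcod Q u = B" and cv: "qcod Q v = C" using assms hom_iff by auto
  define S where "S = {w \<in> qhom Q B C. w \<cdot> u \<sqsubseteq> v}"
  have S: "S \<subseteq> qhom Q B C" unfolding S_def by auto
  have L: "qlimp Q v u = qsup Q B C S" unfolding qlimp_def S_def cu cv ..
  show ?thesis
  proof
    assume "w \<sqsubseteq> qlimp Q v u"
    then have "w \<cdot> u \<sqsubseteq> qsup Q B C S \<cdot> u" using mono_r[of w "qlimp Q v u" B C u A] L sup_hom[OF S] assms(1) by simp
    moreover have "qsup Q B C S \<cdot> u = qsup Q A C ((\<lambda>g. g \<cdot> u) ` S)" using comp_sup_r assms S by blast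
    moreover have "qsup Q A C ((\<lambda>g. g \<cdot> u) ` S) \<sqsubseteq> v"
      apply (rule sup_least) using S assms comp_hom unfolding S_def by auto
    ultimately show "w \<cdot> u \<sqsubseteq> v" using le_trans by metis
  next
    assume "w \<cdot> u \<sqsubseteq> v" then show "w \<sqsubseteq> qlimp Q v u" unfolding L
      by (intro sup_upper[OF S]) (auto simp: S_def assms)
  qed
qed

lemma rimp_hom: assumes "v \<in> qhom Q B C" "w \<in> qhom Q A C" shows "qrimp Q v w \<in> qhom Q A B"
proof -
  have "qdom Q v = B" "qdom Q w = A" using assms hom_iff by auto
  then show ?thesis unfolding qrimp_def using sup_hom[of "{u \<in> qhom Q A B. v \<cdot> u \<sqsubseteq> w}" A B] by auto
qed

lemma rimp_iff: assumes "v \<in> qhom Q B C" "w \<in> qhom Q A C" "u \<in> qhom Q A B"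
  shows "u \<sqsubseteq> qrimp Q v w \<longleftrightarrow> v \<cdot> u \<sqsubseteq> w"
proof -
  have cu: "qdom Q v = B" and cv: "qdom Q w = A" using assms hom_iff by auto
  define S where "S = {u \<in> qhom Q A B. v \<cdot> u \<sqsubseteq> w}"
  have S: "S \<subseteq> qhom Q A B" unfolding S_def by auto
  have L: "qrimp Q v w = qsup Q A B S" unfolding qrimp_def S_def cu cv ..
  show ?thesis
  proof
    assume "u \<sqsubseteq> qrimp Q v w"
    then have "v \<cdot> u \<sqsubseteq> v \<cdot> qsup Q A B S" using mono_l[of u "qrimp Q v w" A B v C] L sup_hom[OF S] assms(1) by simp
    moreover have "v \<cdot> qsup Q A B S = qsup Q A C ((\<lambda>g. v \<cdot> g) ` S)" using comp_sup_l assms S by blast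
    moreover have "qsup Q A C ((\<lambda>g. v \<cdot> g) ` S) \<sqsubseteq> w"
      apply (rule sup_least) using S assms comp_hom unfolding S_def by auto
    ultimately show "v \<cdot> u \<sqsubseteq> w" using le_trans by metis
  next
    assume "v \<cdot> u \<sqsubseteq> w" then show "u \<sqsubseteq> qrimp Q v w" unfolding L
      by (intro sup_upper[OF S]) (auto simp: S_def assms)
  qed
qed

lemma infl_hom: "qinf Q T T' {qlimp Q (v X) (u X) | X. X \<in> I} \<in> qhom Q T T'"
  by (rule inf_hom)

lemma infl_set: assumes "\<And>X. X \<in> I \<Longrightarrow> u X \<in> qhom Q (a X) T"
    "\<And>X. X \<in> I \<Longrightarrow> v X \<in> qhom Q (a X) T'"
  shows "{qlimp Q (v X) (u X) | X. X \<in> I} \<subseteq> qhom Q T T'"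
  using assms limp_hom by blast

lemma infl_le: assumes "\<And>X. X \<in> I \<Longrightarrow> u X \<in> qhom Q (a X) T"
    "\<And>X. X \<in> I \<Longrightarrow> v X \<in> qhom Q (a X) T'" "X \<in> I"
  shows "qinf Q T T' {qlimp Q (v X) (u X) | X. X \<in> I} \<cdot> u X \<sqsubseteq> v X"
proof -
  have "qinf Q T T' {qlimp Q (v X) (u X) | X. X \<in> I} \<sqsubseteq> qlimp Q (v X) (u X)"
    by (rule inf_lower[OF infl_set[OF assms(1,2)]]) (use assms(3) in auto)
  then show ?thesis using limp_iff[OF assms(1)[OF assms(3)] assms(2)[OF assms(3)] infl_hom] by blast
qed

lemma infl_greatest: assumes "\<And>X. X \<in> I \<Longrightarrow> u X \<in> qhom Q (a X) T"
    "\<And>X. X \<in> I \<Longrightarrow> v X \<in> qhom Q (a X) T'" "w \<in> qhom Q T T'"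
    "\<And>X. X \<in> I \<Longrightarrow> w \<cdot> u X \<sqsubseteq> v X"
  shows "w \<sqsubseteq> qinf Q T T' {qlimp Q (v X) (u X) | X. X \<in> I}"
  apply (rule inf_greatest[OF assms(3)])
  using assms limp_iff by blast

lemma infr_hom: "qinf Q T' T {qrimp Q (v Y) (w Y) | Y. Y \<in> I} \<in> qhom Q T' T"
  by (rule inf_hom)

lemma infr_set: assumes "\<And>Y. Y \<in> I \<Longrightarrow> v Y \<in> qhom Q T (b Y)"
    "\<And>Y. Y \<in> I \<Longrightarrow> w Y \<in> qhom Q T' (b Y)"
  shows "{qrimp Q (v Y) (w Y) | Y. Y \<in> I} \<subseteq> qhom Q T' T"
  using assms rimp_hom by blast

lemma infr_le: assumes "\<And>Y. Y \<in> I \<Longrightarrow> v Y \<in> qhom Q T (b Y)"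
    "\<And>Y. Y \<in> I \<Longrightarrow> w Y \<in> qhom Q T' (b Y)" "Y \<in> I"
  shows "v Y \<cdot> qinf Q T' T {qrimp Q (v Y) (w Y) | Y. Y \<in> I} \<sqsubseteq> w Y"
proof -
  have "qinf Q T' T {qrimp Q (v Y) (w Y) | Y. Y \<in> I} \<sqsubseteq> qrimp Q (v Y) (w Y)"
    by (rule inf_lower[OF infr_set[OF assms(1,2)]]) (use assms(3) in auto)
  then show ?thesis using rimp_iff[OF assms(1)[OF assms(3)] assms(2)[OF assms(3)] infr_hom] by blast
qed

lemma infr_greatest: assumes "\<And>Y. Y \<in> I \<Longrightarrow> v Y \<in> qhom Q T (b Y)"
    "\<And>Y. Y \<in> I \<Longrightarrow> w Y \<in> qhom Q T' (b Y)" "u \<in> qhom Q T' T"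
    "\<And>Y. Y \<in> I \<Longrightarrow> v Y \<cdot> u \<sqsubseteq> w Y"
  shows "u \<sqsubseteq> qinf Q T' T {qrimp Q (v Y) (w Y) | Y. Y \<in> I}"
  apply (rule inf_greatest[OF assms(3)])
  using assms rimp_iff by blast

end



context qtl begin

lemma cat_hom: "qcategory Q K \<Longrightarrow> X \<in> cob K \<Longrightarrow> Y \<in> cob K \<Longrightarrow> chom K X Y \<in> qhom Q (cext K X) (cext K Y)"
  unfolding qcategory_def by blast

lemma cat_id: "qcategory Q K \<Longrightarrow> X \<in> cob K \<Longrightarrow> qid Q (cext K X) \<sqsubseteq> chom K X X"
  unfolding qcategory_def by blast

lemma cat_comp: "qcategory Q K \<Longrightarrow> X \<in> cob K \<Longrightarrow> Y \<in> cob K \<Longrightarrow> Z \<in> cob K \<Longrightarrow>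
    chom K Y Z \<cdot> chom K X Y \<sqsubseteq> chom K X Z"
  unfolding qcategory_def by blast

lemma iso_refl: "qcategory Q K \<Longrightarrow> X \<in> cob K \<Longrightarrow> qiso Q K X X"
  unfolding qiso_def using cat_id[of K X] by simp

lemma iso_sym: assumes "qiso Q K X Y" shows "qiso Q K Y X"
proof -
  have e: "cext K Y = cext K X" using assms unfolding qiso_def by simp
  show ?thesis using assms unfolding qiso_def e by simp
qed

lemma id_le_comp_r: assumes "qid Q A \<sqsubseteq> a" "a \<in> qhom Q A A" "f \<in> qhom Q A B"
  shows "f \<sqsubseteq> f \<cdot> a"
  using mono_l[OF assms(1,2,3)] id_r[OF assms(3)] by simp

lemma id_le_comp_l: assumes "qid Q B \<sqsubseteq> a" "a \<in> qhom Q B B" "f \<in> qhom Q A B"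
  shows "f \<sqsubseteq> a \<cdot> f"
  using mono_r[OF assms(1,2,3)] id_l[OF assms(3)] by simp

lemma iso_homL1: assumes K: "qcategory Q K" and i: "qiso Q K Z Z'" and W: "W \<in> cob K"
  shows "chom K Z' W \<sqsubseteq> chom K Z W"
proof -
  from i have Z: "Z \<in> cob K" and Z': "Z' \<in> cob K" and e: "cext K Z = cext K Z'"
    and id: "qid Q (cext K Z) \<sqsubseteq> chom K Z Z'" unfolding qiso_def by auto
  have h1: "chom K Z Z' \<in> qhom Q (cext K Z) (cext K Z)" using cat_hom[OF K Z Z'] e by simp
  have h2: "chom K Z' W \<in> qhom Q (cext K Z) (cext K W)" using cat_hom[OF K Z' W] e by simp
  have "chom K Z' W \<sqsubseteq> chom K Z' W \<cdot> chom K Z Z'"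
    by (rule id_le_comp_r[OF id h1 h2])
  also have "\<dots> \<sqsubseteq> chom K Z W" using cat_comp[OF K Z Z' W] .
  finally show ?thesis using le_trans by blast
qed

lemma iso_homL: assumes K: "qcategory Q K" and i: "qiso Q K Z Z'" and W: "W \<in> cob K"
  shows "chom K Z W = chom K Z' W"
  using iso_homL1[OF K i W] iso_homL1[OF K iso_sym[OF i] W] le_antisym by blast

lemma iso_homR1: assumes K: "qcategory Q K" and i: "qiso Q K Z Z'" and W: "W \<in> cob K"
  shows "chom K W Z \<sqsubseteq> chom K W Z'"
proof -
  from i have Z: "Z \<in> cob K" and Z': "Z' \<in> cob K" and e: "cext K Z = cext K Z'"
    and id: "qid Q (cext K Z) \<sqsubseteq> chom K Z Z'" unfolding qiso_def by auto
  have h1: "chom K Z Z' \<in> qhom Q (cext K Z) (cext K Z)" using cat_hom[OF K Z Z'] e by simp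
  have h2: "chom K W Z \<in> qhom Q (cext K W) (cext K Z)" using cat_hom[OF K W Z] by simp
  have "chom K W Z \<sqsubseteq> chom K Z Z' \<cdot> chom K W Z"
    by (rule id_le_comp_l[OF id h1 h2])
  also have "\<dots> \<sqsubseteq> chom K W Z'" using cat_comp[OF K W Z Z'] .
  finally show ?thesis using le_trans by blast
qed

lemma iso_homR: assumes K: "qcategory Q K" and i: "qiso Q K Z Z'" and W: "W \<in> cob K"
  shows "chom K W Z = chom K W Z'"
  using iso_homR1[OF K i W] iso_homR1[OF K iso_sym[OF i] W] le_antisym by blast

lemma psh_val: "presheaf Q E T \<phi> \<Longrightarrow> X \<in> cob E \<Longrightarrow> \<phi> X \<in> qhom Q (cext E X) T"
  unfolding presheaf_def by blast

lemma psh_comp: "presheaf Q E T \<phi> \<Longrightarrow> X \<in> cob E \<Longrightarrow> X' \<in> cob E \<Longrightarrow> \<phi> X \<cdot> chom E X' X \<sqsubseteq> \<phi> X'"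
  unfolding presheaf_def by blast

lemma psh_undef: "presheaf Q E T \<phi> \<Longrightarrow> X \<notin> cob E \<Longrightarrow> \<phi> X = undefined"
  unfolding presheaf_def by blast

lemma psh_hom_eq: "psh_hom Q E (\<phi>,T) (\<psi>,T') = qinf Q T T' {qlimp Q (\<psi> X) (\<phi> X) | X. X \<in> cob E}"
  unfolding psh_hom_def by simp

lemma psh_hom_hom: "psh_hom Q E (\<phi>,T) (\<psi>,T') \<in> qhom Q T T'"
  unfolding psh_hom_eq by (rule inf_hom)

lemma psh_hom_le: assumes "presheaf Q E T \<phi>" "presheaf Q E T' \<psi>" "X \<in> cob E"
  shows "psh_hom Q E (\<phi>,T) (\<psi>,T') \<cdot> \<phi> X \<sqsubseteq> \<psi> X"
  unfolding psh_hom_eq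
  by (rule infl_le[where a="cext E"]) (use assms psh_val in auto)

lemma psh_hom_greatest: assumes "presheaf Q E T \<phi>" "presheaf Q E T' \<psi>" "w \<in> qhom Q T T'"
  "\<And>X. X \<in> cob E \<Longrightarrow> w \<cdot> \<phi> X \<sqsubseteq> \<psi> X"
  shows "w \<sqsubseteq> psh_hom Q E (\<phi>,T) (\<psi>,T')"
  unfolding psh_hom_eq
  by (rule infl_greatest[where a="cext E"]) (use assms psh_val in auto)

lemma psh_cat: assumes "cob K \<subseteq> {(\<phi>, T). presheaf Q E T \<phi>}" "cext K = snd" "chom K = psh_hom Q E"
  shows "qcategory Q K"
  unfolding qcategory_def
proof (intro conjI ballI)
  fix p q assume "p \<in> cob K" "q \<in> cob K"
  obtain \<phi> T where pe: "p = (\<phi>,T)" by (cases p)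
  obtain \<psi> T' where qe: "q = (\<psi>,T')" by (cases q)
  show "chom K p q \<in> qhom Q (cext K p) (cext K q)" unfolding pe qe assms(2,3) snd_conv
    by (rule psh_hom_hom)
next
  fix p assume p: "p \<in> cob K"
  obtain \<phi> T where pe: "p = (\<phi>,T)" by (cases p)
  have P: "presheaf Q E T \<phi>" using p pe assms(1) by auto
  show "qid Q (cext K p) \<sqsubseteq> chom K p p" unfolding pe assms(2,3) snd_conv
    apply (rule psh_hom_greatest[OF P P id_hom])
    using id_l psh_val[OF P] le_refl by metis
next
  fix p q r assume p: "p \<in> cob K" and q: "q \<in> cob K" and r: "r \<in> cob K"
  obtain \<phi> T where pe: "p = (\<phi>,T)" by (cases p)
  obtain \<psi> T' where qe: "q = (\<psi>,T')" by (cases q)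
  obtain \<chi> T'' where re: "r = (\<chi>,T'')" by (cases r)
  have P: "presheaf Q E T \<phi>" "presheaf Q E T' \<psi>" "presheaf Q E T'' \<chi>"
    using p q r pe qe re assms(1) by auto
  show "chom K q r \<cdot> chom K p q \<sqsubseteq> chom K p r" unfolding pe qe re assms(2,3)
  proof (rule psh_hom_greatest[OF P(1,3)])
    show "psh_hom Q E (\<psi>, T') (\<chi>, T'') \<cdot> psh_hom Q E (\<phi>, T) (\<psi>, T') \<in> qhom Q T T''"
      using comp_hom psh_hom_hom by blast
    fix X assume X: "X \<in> cob E"
    let ?a = "psh_hom Q E (\<psi>, T') (\<chi>, T'')" and ?b = "psh_hom Q E (\<phi>, T) (\<psi>, T')"
    have "(?a \<cdot> ?b) \<cdot> \<phi> X = ?a \<cdot> (?b \<cdot> \<phi> X)"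
      using assoc[OF psh_val[OF P(1) X] psh_hom_hom[of E \<phi> T \<psi> T'] psh_hom_hom[of E \<psi> T' \<chi> T'']] by simp
    also have "\<dots> \<sqsubseteq> ?a \<cdot> \<psi> X"
      by (rule mono_l[OF psh_hom_le[OF P(1,2) X] psh_val[OF P(2) X] psh_hom_hom])
    also have "\<dots> \<sqsubseteq> \<chi> X" by (rule psh_hom_le[OF P(2,3) X])
    finally show "(?a \<cdot> ?b) \<cdot> \<phi> X \<sqsubseteq> \<chi> X" using le_trans by blast
  qed
qed

lemma PSh_cat: "qcategory Q (PSh Q E)"
  by (rule psh_cat) (simp_all add: PSh_def)

lemma yoneda_psh: assumes E: "qcategory Q E" and X: "X \<in> cob E"
  shows "presheaf Q E (cext E X) (fst (yoneda Q E X))"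
  unfolding presheaf_def yoneda_def fst_conv
proof (intro conjI ballI allI impI)
  fix X' assume "X' \<in> cob E"
  then show "(if X' \<in> cob E then chom E X' X else undefined) \<in> qhom Q (cext E X') (cext E X)"
    using cat_hom[OF E _ X] by simp
next
  fix X' assume "X' \<notin> cob E"
  then show "(if X' \<in> cob E then chom E X' X else undefined) = undefined" by simp
next
  fix X' X'' assume "X' \<in> cob E" "X'' \<in> cob E"
  then show "(if X' \<in> cob E then chom E X' X else undefined) \<cdot> chom E X'' X' \<sqsubseteq>
     (if X'' \<in> cob E then chom E X'' X else undefined)"
    using cat_comp[OF E _ _ X] by simp
qed

lemma yoneda_lemma: assumes E: "qcategory Q E" and X: "X \<in> cob E" and P: "presheaf Q E T \<phi>"
  shows "psh_hom Q E (yoneda Q E X) (\<phi>,T) = \<phi> X"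
proof -
  have Y: "presheaf Q E (cext E X) (fst (yoneda Q E X))" by (rule yoneda_psh[OF E X])
  have ye: "yoneda Q E X = (fst (yoneda Q E X), cext E X)" unfolding yoneda_def by simp
  let ?p = "psh_hom Q E (fst (yoneda Q E X), cext E X) (\<phi>,T)"
  have "?p \<sqsubseteq> ?p \<cdot> chom E X X"
    by (rule id_le_comp_r[OF cat_id[OF E X] cat_hom[OF E X X] psh_hom_hom])
  also have "\<dots> \<sqsubseteq> \<phi> X"
    using psh_hom_le[OF Y P X] X unfolding yoneda_def by simp
  finally have 1: "?p \<sqsubseteq> \<phi> X" using le_trans by blast
  have 2: "\<phi> X \<sqsubseteq> ?p"
    apply (rule psh_hom_greatest[OF Y P psh_val[OF P X]])
    using psh_comp[OF P X] unfolding yoneda_def by simp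
  show ?thesis by (subst ye) (rule le_antisym[OF 1 2])
qed

end



locale qdist = qtl Q for Q :: "('o,'a) quantaloid" +
  fixes E :: "('e,'o,'a) qcat" and D :: "('d,'o,'a) qcat" and \<Phi> :: "'e \<Rightarrow> 'd \<Rightarrow> 'a"
  assumes E: "qcategory Q E" and D: "qcategory Q D" and Phi: "distributor Q E D \<Phi>"
begin

abbreviation "up \<equiv> dist_up Q E D \<Phi>"
abbreviation "down \<equiv> dist_down Q E D \<Phi>"
abbreviation "cl T \<phi> \<equiv> down T (up T \<phi>)"
abbreviation "IB \<equiv> isbell Q E D \<Phi>"

lemma Phi_hom: "X \<in> cob E \<Longrightarrow> Y \<in> cob D \<Longrightarrow> \<Phi> X Y \<in> qhom Q (cext E X) (cext D Y)"
  using Phi unfolding distributor_def by blast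

lemma Phi_ax: "X \<in> cob E \<Longrightarrow> X' \<in> cob E \<Longrightarrow> Y \<in> cob D \<Longrightarrow> Y' \<in> cob D \<Longrightarrow>
   chom D Y Y' \<cdot> (\<Phi> X Y \<cdot> chom E X' X) \<sqsubseteq> \<Phi> X' Y'"
  using Phi unfolding distributor_def by blast

lemma Phi_left: assumes X: "X \<in> cob E" and Y: "Y \<in> cob D" and Y': "Y' \<in> cob D"
  shows "chom D Y Y' \<cdot> \<Phi> X Y \<sqsubseteq> \<Phi> X Y'"
proof -
  have "\<Phi> X Y \<sqsubseteq> \<Phi> X Y \<cdot> chom E X X"
    by (rule id_le_comp_r[OF cat_id[OF E X] cat_hom[OF E X X] Phi_hom[OF X Y]])
  then have "chom D Y Y' \<cdot> \<Phi> X Y \<sqsubseteq> chom D Y Y' \<cdot> (\<Phi> X Y \<cdot> chom E X X)"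
    by (rule mono_l[OF _ comp_hom[OF cat_hom[OF E X X] Phi_hom[OF X Y]] cat_hom[OF D Y Y']])
  also have "\<dots> \<sqsubseteq> \<Phi> X Y'" by (rule Phi_ax[OF X X Y Y'])
  finally show ?thesis .
qed

lemma Phi_right: assumes X: "X \<in> cob E" and X': "X' \<in> cob E" and Y: "Y \<in> cob D"
  shows "\<Phi> X Y \<cdot> chom E X' X \<sqsubseteq> \<Phi> X' Y"
proof -
  have "\<Phi> X Y \<cdot> chom E X' X \<sqsubseteq> chom D Y Y \<cdot> (\<Phi> X Y \<cdot> chom E X' X)"
    by (rule id_le_comp_l[OF cat_id[OF D Y] cat_hom[OF D Y Y] comp_hom[OF cat_hom[OF E X' X] Phi_hom[OF X Y]]])
  also have "\<dots> \<sqsubseteq> \<Phi> X' Y" by (rule Phi_ax[OF X X' Y Y])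
  finally show ?thesis .
qed

lemma up_eq: "Y \<in> cob D \<Longrightarrow> up T \<phi> Y = qinf Q T (cext D Y) {qlimp Q (\<Phi> X Y) (\<phi> X) | X. X \<in> cob E}"
  unfolding dist_up_def by simp

lemma up_undef: "Y \<notin> cob D \<Longrightarrow> up T \<phi> Y = undefined"
  unfolding dist_up_def by simp

lemma up_hom: assumes Y: "Y \<in> cob D" shows "up T \<phi> Y \<in> qhom Q T (cext D Y)"
  unfolding up_eq[OF Y] by (rule inf_hom)

lemma up_hom_ball: "\<forall>Y\<in>cob D. up T \<phi> Y \<in> qhom Q T (cext D Y)"
  using up_hom by blast

lemma up_le: assumes P: "presheaf Q E T \<phi>" and X: "X \<in> cob E" and Y: "Y \<in> cob D"
  shows "up T \<phi> Y \<cdot> \<phi> X \<sqsubseteq> \<Phi> X Y"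
  unfolding up_eq[OF Y]
  by (rule infl_le[where a="cext E"]) (use P X Y psh_val Phi_hom in auto)

lemma up_greatest: assumes P: "presheaf Q E T \<phi>" and Y: "Y \<in> cob D"
  and a: "a \<in> qhom Q T (cext D Y)" and le: "\<And>X. X \<in> cob E \<Longrightarrow> a \<cdot> \<phi> X \<sqsubseteq> \<Phi> X Y"
  shows "a \<sqsubseteq> up T \<phi> Y"
  unfolding up_eq[OF Y]
  by (rule infl_greatest[where a="cext E"]) (use P Y a le psh_val Phi_hom in auto)

lemma down_eq: "X \<in> cob E \<Longrightarrow> down T \<psi> X = qinf Q (cext E X) T {qrimp Q (\<psi> Y) (\<Phi> X Y) | Y. Y \<in> cob D}"
  unfolding dist_down_def by simp

lemma down_undef: "X \<notin> cob E \<Longrightarrow> down T \<psi> X = undefined"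
  unfolding dist_down_def by simp

lemma down_hom: assumes X: "X \<in> cob E" shows "down T \<psi> X \<in> qhom Q (cext E X) T"
  unfolding down_eq[OF X] by (rule inf_hom)

lemma down_le: assumes P: "\<forall>Y\<in>cob D. \<psi> Y \<in> qhom Q T (cext D Y)"
  and X: "X \<in> cob E" and Y: "Y \<in> cob D"
  shows "\<psi> Y \<cdot> down T \<psi> X \<sqsubseteq> \<Phi> X Y"
  unfolding down_eq[OF X]
  by (rule infr_le[where b="cext D"]) (use P X Y Phi_hom in auto)

lemma down_greatest: assumes P: "\<forall>Y\<in>cob D. \<psi> Y \<in> qhom Q T (cext D Y)"
  and X: "X \<in> cob E" and a: "a \<in> qhom Q (cext E X) T"
  and le: "\<And>Y. Y \<in> cob D \<Longrightarrow> \<psi> Y \<cdot> a \<sqsubseteq> \<Phi> X Y"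
  shows "a \<sqsubseteq> down T \<psi> X"
  unfolding down_eq[OF X]
  by (rule infr_greatest[where b="cext D"]) (use P X a le Phi_hom in auto)

lemma cl_ge: assumes P: "presheaf Q E T \<phi>" and X: "X \<in> cob E"
  shows "\<phi> X \<sqsubseteq> cl T \<phi> X"
  by (rule down_greatest[OF up_hom_ball X psh_val[OF P X]]) (erule up_le[OF P X])

lemma cl_psh: assumes P: "presheaf Q E T \<phi>"
  shows "presheaf Q E T (cl T \<phi>)"
  unfolding presheaf_def
proof (intro conjI ballI allI impI)
  fix X assume "X \<in> cob E" then show "cl T \<phi> X \<in> qhom Q (cext E X) T" by (rule down_hom)
next
  fix X assume "X \<notin> cob E" then show "cl T \<phi> X = undefined" by (rule down_undef)
next
  fix X X' assume X: "X \<in> cob E" and X': "X' \<in> cob E"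
  show "cl T \<phi> X \<cdot> chom E X' X \<sqsubseteq> cl T \<phi> X'"
  proof (rule down_greatest[OF up_hom_ball X' comp_hom[OF cat_hom[OF E X' X] down_hom[OF X]]])
    fix Y assume Y: "Y \<in> cob D"
    have "up T \<phi> Y \<cdot> (cl T \<phi> X \<cdot> chom E X' X) = (up T \<phi> Y \<cdot> cl T \<phi> X) \<cdot> chom E X' X"
      by (rule assoc[OF cat_hom[OF E X' X] down_hom[OF X] up_hom[OF Y]])
    also have "\<dots> \<sqsubseteq> \<Phi> X Y \<cdot> chom E X' X"
      by (rule mono_r[OF down_le[OF up_hom_ball X Y] Phi_hom[OF X Y] cat_hom[OF E X' X]])
    also have "\<dots> \<sqsubseteq> \<Phi> X' Y" by (rule Phi_right[OF X X' Y])
    finally show "up T \<phi> Y \<cdot> (cl T \<phi> X \<cdot> chom E X' X) \<sqsubseteq> \<Phi> X' Y" .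
  qed
qed

lemma up_cl: assumes P: "presheaf Q E T \<phi>"
  shows "up T (cl T \<phi>) = up T \<phi>"
proof
  fix Y
  show "up T (cl T \<phi>) Y = up T \<phi> Y"
  proof (cases "Y \<in> cob D")
    case False then show ?thesis by (simp add: up_undef)
  next
    case Y: True
    have 1: "up T (cl T \<phi>) Y \<sqsubseteq> up T \<phi> Y"
    proof (rule up_greatest[OF P Y up_hom[OF Y]])
      fix X assume X: "X \<in> cob E"
      have "up T (cl T \<phi>) Y \<cdot> \<phi> X \<sqsubseteq> up T (cl T \<phi>) Y \<cdot> cl T \<phi> X"
        by (rule mono_l[OF cl_ge[OF P X] down_hom[OF X] up_hom[OF Y]])
      also have "\<dots> \<sqsubseteq> \<Phi> X Y" by (rule up_le[OF cl_psh[OF P] X Y])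
      finally show "up T (cl T \<phi>) Y \<cdot> \<phi> X \<sqsubseteq> \<Phi> X Y" .
    qed
    have 2: "up T \<phi> Y \<sqsubseteq> up T (cl T \<phi>) Y"
      by (rule up_greatest[OF cl_psh[OF P] Y up_hom[OF Y]]) (rule down_le[OF up_hom_ball _ Y])
    show ?thesis by (rule le_antisym[OF 1 2])
  qed
qed

lemma cl_idem: assumes P: "presheaf Q E T \<phi>"
  shows "cl T (cl T \<phi>) = cl T \<phi>"
  by (simp add: up_cl[OF P])

lemma isbell_iff: "(\<phi>,T) \<in> cob IB \<longleftrightarrow> presheaf Q E T \<phi> \<and> cl T \<phi> = \<phi>"
  unfolding isbell_def by simp

lemma isbell_ext: "cext IB = snd" and isbell_hom: "chom IB = psh_hom Q E"
  unfolding isbell_def by simp_all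

lemma cl_isbell: assumes P: "presheaf Q E T \<phi>" shows "(cl T \<phi>, T) \<in> cob IB"
  unfolding isbell_iff using cl_psh[OF P] cl_idem[OF P] by simp

lemma isbell_cat: "qcategory Q IB"
  by (rule psh_cat) (auto simp: isbell_def)

lemma closed_target: assumes P: "presheaf Q E T \<phi>" and I: "(\<psi>,T') \<in> cob IB"
  shows "psh_hom Q E (cl T \<phi>, T) (\<psi>, T') = psh_hom Q E (\<phi>, T) (\<psi>, T')"
proof -
  have Pp: "presheaf Q E T' \<psi>" and cp: "cl T' \<psi> = \<psi>" using I isbell_iff by auto
  have Pc: "presheaf Q E T (cl T \<phi>)" by (rule cl_psh[OF P])
  let ?a = "psh_hom Q E (cl T \<phi>, T) (\<psi>, T')" and ?b = "psh_hom Q E (\<phi>, T) (\<psi>, T')"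
  have 1: "?a \<sqsubseteq> ?b"
  proof (rule psh_hom_greatest[OF P Pp psh_hom_hom])
    fix X assume X: "X \<in> cob E"
    have "?a \<cdot> \<phi> X \<sqsubseteq> ?a \<cdot> cl T \<phi> X"
      by (rule mono_l[OF cl_ge[OF P X] down_hom[OF X] psh_hom_hom])
    also have "\<dots> \<sqsubseteq> \<psi> X" by (rule psh_hom_le[OF Pc Pp X])
    finally show "?a \<cdot> \<phi> X \<sqsubseteq> \<psi> X" .
  qed
  have 2: "?b \<sqsubseteq> ?a"
  proof (rule psh_hom_greatest[OF Pc Pp psh_hom_hom])
    fix X assume X: "X \<in> cob E"
    have "?b \<cdot> cl T \<phi> X \<sqsubseteq> cl T' \<psi> X"
    proof (rule down_greatest[OF up_hom_ball X comp_hom[OF down_hom[OF X] psh_hom_hom]])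
      fix Y assume Y: "Y \<in> cob D"
      have u: "up T' \<psi> Y \<cdot> ?b \<sqsubseteq> up T \<phi> Y"
      proof (rule up_greatest[OF P Y comp_hom[OF psh_hom_hom up_hom[OF Y]]])
        fix X' assume X': "X' \<in> cob E"
        have "(up T' \<psi> Y \<cdot> ?b) \<cdot> \<phi> X' = up T' \<psi> Y \<cdot> (?b \<cdot> \<phi> X')"
          by (rule assoc[OF psh_val[OF P X'] psh_hom_hom up_hom[OF Y], symmetric])
        also have "\<dots> \<sqsubseteq> up T' \<psi> Y \<cdot> \<psi> X'"
          by (rule mono_l[OF psh_hom_le[OF P Pp X'] psh_val[OF Pp X'] up_hom[OF Y]])
        also have "\<dots> \<sqsubseteq> \<Phi> X' Y" by (rule up_le[OF Pp X' Y])
        finally show "(up T' \<psi> Y \<cdot> ?b) \<cdot> \<phi> X' \<sqsubseteq> \<Phi> X' Y" .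
      qed
      have "up T' \<psi> Y \<cdot> (?b \<cdot> cl T \<phi> X) = (up T' \<psi> Y \<cdot> ?b) \<cdot> cl T \<phi> X"
        by (rule assoc[OF down_hom[OF X] psh_hom_hom up_hom[OF Y]])
      also have "\<dots> \<sqsubseteq> up T \<phi> Y \<cdot> cl T \<phi> X"
        by (rule mono_r[OF u up_hom[OF Y] down_hom[OF X]])
      also have "\<dots> \<sqsubseteq> \<Phi> X Y" by (rule down_le[OF up_hom_ball X Y])
      finally show "up T' \<psi> Y \<cdot> (?b \<cdot> cl T \<phi> X) \<sqsubseteq> \<Phi> X Y" .
    qed
    then show "?b \<cdot> cl T \<phi> X \<sqsubseteq> \<psi> X" using cp by simp
  qed
  show ?thesis by (rule le_antisym[OF 1 2])
qed

definition col :: "'d \<Rightarrow> 'e \<Rightarrow> 'a" where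
  "col Y = (\<lambda>X. if X \<in> cob E then \<Phi> X Y else undefined)"

lemma col_psh: assumes Y: "Y \<in> cob D" shows "presheaf Q E (cext D Y) (col Y)"
  unfolding presheaf_def col_def
  using Phi_hom[OF _ Y] Phi_right[OF _ _ Y] by simp

lemma col_isbell: assumes Y: "Y \<in> cob D" shows "(col Y, cext D Y) \<in> cob IB"
  unfolding isbell_iff
proof (intro conjI col_psh[OF Y] ext)
  fix X
  show "cl (cext D Y) (col Y) X = col Y X"
  proof (cases "X \<in> cob E")
    case False then show ?thesis by (simp add: down_undef col_def)
  next
    case X: True
    have P: "presheaf Q E (cext D Y) (col Y)" by (rule col_psh[OF Y])
    have i: "qid Q (cext D Y) \<sqsubseteq> up (cext D Y) (col Y) Y"
    proof (rule up_greatest[OF P Y id_hom])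
      fix X' assume X': "X' \<in> cob E"
      show "qid Q (cext D Y) \<cdot> col Y X' \<sqsubseteq> \<Phi> X' Y"
        using id_l[OF Phi_hom[OF X' Y]] X' le_refl by (simp add: col_def)
    qed
    have "cl (cext D Y) (col Y) X \<sqsubseteq> up (cext D Y) (col Y) Y \<cdot> cl (cext D Y) (col Y) X"
      by (rule id_le_comp_l[OF i up_hom[OF Y] down_hom[OF X]])
    also have "\<dots> \<sqsubseteq> \<Phi> X Y" by (rule down_le[OF up_hom_ball X Y])
    finally have 1: "cl (cext D Y) (col Y) X \<sqsubseteq> col Y X" using X by (simp add: col_def)
    show ?thesis by (rule le_antisym[OF 1 cl_ge[OF P X]])
  qed
qed

lemma up_covpsh: assumes P: "presheaf Q E T \<phi>" shows "covpresheaf Q D T (up T \<phi>)"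
  unfolding covpresheaf_def
proof (intro conjI ballI allI impI)
  fix Y assume "Y \<in> cob D" then show "up T \<phi> Y \<in> qhom Q T (cext D Y)" by (rule up_hom)
next
  fix Y assume "Y \<notin> cob D" then show "up T \<phi> Y = undefined" by (rule up_undef)
next
  fix Y Y' assume Y: "Y \<in> cob D" and Y': "Y' \<in> cob D"
  show "chom D Y Y' \<cdot> up T \<phi> Y \<sqsubseteq> up T \<phi> Y'"
  proof (rule up_greatest[OF P Y' comp_hom[OF up_hom[OF Y] cat_hom[OF D Y Y']]])
    fix X assume X: "X \<in> cob E"
    have "(chom D Y Y' \<cdot> up T \<phi> Y) \<cdot> \<phi> X = chom D Y Y' \<cdot> (up T \<phi> Y \<cdot> \<phi> X)"
      by (rule assoc[OF psh_val[OF P X] up_hom[OF Y] cat_hom[OF D Y Y'], symmetric])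
    also have "\<dots> \<sqsubseteq> chom D Y Y' \<cdot> \<Phi> X Y"
      by (rule mono_l[OF up_le[OF P X Y] Phi_hom[OF X Y] cat_hom[OF D Y Y']])
    also have "\<dots> \<sqsubseteq> \<Phi> X Y'" by (rule Phi_left[OF X Y Y'])
    finally show "(chom D Y Y' \<cdot> up T \<phi> Y) \<cdot> \<phi> X \<sqsubseteq> \<Phi> X Y'" .
  qed
qed

lemma hom_via_up: assumes P': "presheaf Q E T' \<phi>'" and I: "(\<phi>,T) \<in> cob IB"
  shows "psh_hom Q E (\<phi>',T') (\<phi>,T) = qinf Q T' T {qrimp Q (up T \<phi> Y) (up T' \<phi>' Y) | Y. Y \<in> cob D}"
proof -
  have P: "presheaf Q E T \<phi>" and cp: "cl T \<phi> = \<phi>" using I isbell_iff by auto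
  let ?a = "psh_hom Q E (\<phi>',T') (\<phi>,T)"
  let ?b = "qinf Q T' T {qrimp Q (up T \<phi> Y) (up T' \<phi>' Y) | Y. Y \<in> cob D}"
  have 1: "?a \<sqsubseteq> ?b"
  proof (rule infr_greatest[where b="cext D"])
    show "?a \<in> qhom Q T' T" by (rule psh_hom_hom)
    fix Y assume Y: "Y \<in> cob D"
    show "up T \<phi> Y \<in> qhom Q T (cext D Y)" "up T' \<phi>' Y \<in> qhom Q T' (cext D Y)"
      using up_hom[OF Y] by auto
    show "up T \<phi> Y \<cdot> ?a \<sqsubseteq> up T' \<phi>' Y"
    proof (rule up_greatest[OF P' Y comp_hom[OF psh_hom_hom up_hom[OF Y]]])
      fix X assume X: "X \<in> cob E"
      have "(up T \<phi> Y \<cdot> ?a) \<cdot> \<phi>' X = up T \<phi> Y \<cdot> (?a \<cdot> \<phi>' X)"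
        by (rule assoc[OF psh_val[OF P' X] psh_hom_hom up_hom[OF Y], symmetric])
      also have "\<dots> \<sqsubseteq> up T \<phi> Y \<cdot> \<phi> X"
        by (rule mono_l[OF psh_hom_le[OF P' P X] psh_val[OF P X] up_hom[OF Y]])
      also have "\<dots> \<sqsubseteq> \<Phi> X Y" by (rule up_le[OF P X Y])
      finally show "(up T \<phi> Y \<cdot> ?a) \<cdot> \<phi>' X \<sqsubseteq> \<Phi> X Y" .
    qed
  qed
  have bh: "?b \<in> qhom Q T' T" by (rule inf_hom)
  have 2: "?b \<sqsubseteq> ?a"
  proof (rule psh_hom_greatest[OF P' P bh])
    fix X assume X: "X \<in> cob E"
    have "?b \<cdot> \<phi>' X \<sqsubseteq> cl T \<phi> X"
    proof (rule down_greatest[OF up_hom_ball X comp_hom[OF psh_val[OF P' X] bh]])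
      fix Y assume Y: "Y \<in> cob D"
      have u: "up T \<phi> Y \<cdot> ?b \<sqsubseteq> up T' \<phi>' Y"
        by (rule infr_le[where b="cext D"]) (use Y up_hom in auto)
      have "up T \<phi> Y \<cdot> (?b \<cdot> \<phi>' X) = (up T \<phi> Y \<cdot> ?b) \<cdot> \<phi>' X"
        by (rule assoc[OF psh_val[OF P' X] bh up_hom[OF Y]])
      also have "\<dots> \<sqsubseteq> up T' \<phi>' Y \<cdot> \<phi>' X"
        by (rule mono_r[OF u up_hom[OF Y] psh_val[OF P' X]])
      also have "\<dots> \<sqsubseteq> \<Phi> X Y" by (rule up_le[OF P' X Y])
      finally show "up T \<phi> Y \<cdot> (?b \<cdot> \<phi>' X) \<sqsubseteq> \<Phi> X Y" .
    qed
    then show "?b \<cdot> \<phi>' X \<sqsubseteq> \<phi> X" using cp by simp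
  qed
  show ?thesis by (rule le_antisym[OF 1 2])
qed

end



context qdist begin

lemma functor_ob: "qfunctor Q E' C F \<Longrightarrow> X \<in> cob E' \<Longrightarrow> F X \<in> cob C"
  unfolding qfunctor_def by blast
lemma functor_ext: "qfunctor Q E' C F \<Longrightarrow> X \<in> cob E' \<Longrightarrow> cext C (F X) = cext E' X"
  unfolding qfunctor_def by blast
lemma functor_le: "qfunctor Q E' C F \<Longrightarrow> X \<in> cob E' \<Longrightarrow> Y \<in> cob E' \<Longrightarrow> chom E' X Y \<sqsubseteq> chom C (F X) (F Y)"
  unfolding qfunctor_def by blast

lemma density_formula:
  assumes C: "qcategory Q C" and F: "qfunctor Q E C F" and dn: "dense Q E C F"
  and Z: "Z \<in> cob C" and W: "W \<in> cob C"
  shows "chom C Z W = qinf Q (cext C Z) (cext C W)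
     {qlimp Q (chom C (F X) W) (chom C (F X) Z) | X. X \<in> cob E}"
proof -
  obtain T \<psi> Z' where P: "presheaf Q E T \<psi>" and cl: "is_wcolim Q E C F T \<psi> Z'" and i: "qiso Q C Z Z'"
    using dn Z unfolding dense_def by blast
  have Z': "Z' \<in> cob C" and eT: "cext C Z' = T"
    and colim: "\<And>W. W \<in> cob C \<Longrightarrow> chom C Z' W = qinf Q T (cext C W) {qlimp Q (chom C (F X) W) (\<psi> X) | X. X \<in> cob E}"
    using cl unfolding is_wcolim_def by auto
  have eZ: "cext C Z = T" using i eT unfolding qiso_def by simp
  have FX: "\<And>X. X \<in> cob E \<Longrightarrow> F X \<in> cob C" using functor_ob[OF F] .
  have FXe: "\<And>X. X \<in> cob E \<Longrightarrow> cext C (F X) = cext E X" using functor_ext[OF F] .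
  have hFZ: "\<And>X. X \<in> cob E \<Longrightarrow> chom C (F X) Z' \<in> qhom Q (cext E X) T"
    using cat_hom[OF C FX Z'] FXe eT by metis
  have hFW: "\<And>X W. X \<in> cob E \<Longrightarrow> W \<in> cob C \<Longrightarrow> chom C (F X) W \<in> qhom Q (cext E X) (cext C W)"
    using cat_hom[OF C FX] FXe by metis
  have psi_le: "\<psi> X \<sqsubseteq> chom C (F X) Z'" if X: "X \<in> cob E" for X
  proof -
    have idl: "qid Q T \<sqsubseteq> chom C Z' Z'" using cat_id[OF C Z'] eT by simp
    have hZZ: "chom C Z' Z' \<in> qhom Q T T" using cat_hom[OF C Z' Z'] eT by simp
    have "\<psi> X \<sqsubseteq> chom C Z' Z' \<cdot> \<psi> X"
      by (rule id_le_comp_l[OF idl hZZ psh_val[OF P X]])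
    also have "\<dots> \<sqsubseteq> chom C (F X) Z'"
      unfolding colim[OF Z'] eT
      by (rule infl_le[where a="cext E"]) (use X psh_val[OF P] hFZ in auto)
    finally show ?thesis .
  qed
  let ?R = "qinf Q T (cext C W) {qlimp Q (chom C (F X) W) (chom C (F X) Z') | X. X \<in> cob E}"
  have Rh: "?R \<in> qhom Q T (cext C W)" by (rule inf_hom)
  have ZWh: "chom C Z' W \<in> qhom Q T (cext C W)" using cat_hom[OF C Z' W] eT by simp
  have 1: "chom C Z' W \<sqsubseteq> ?R"
    apply (rule infl_greatest[where a="cext E", OF hFZ hFW[OF _ W] ZWh], assumption, assumption)
    using cat_comp[OF C FX Z' W] .
  have 2: "?R \<sqsubseteq> chom C Z' W"
    unfolding colim[OF W]
  proof (rule infl_greatest[where a="cext E", OF psh_val[OF P] hFW[OF _ W] Rh], assumption, assumption)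
    fix X assume X: "X \<in> cob E"
    have "?R \<cdot> \<psi> X \<sqsubseteq> ?R \<cdot> chom C (F X) Z'" by (rule mono_l[OF psi_le[OF X] hFZ[OF X] Rh])
    also have "\<dots> \<sqsubseteq> chom C (F X) W"
      by (rule infl_le[where a="cext E", OF hFZ hFW[OF _ W]]) (use X in auto)
    finally show "?R \<cdot> \<psi> X \<sqsubseteq> chom C (F X) W" .
  qed
  have "chom C Z W = chom C Z' W" by (rule iso_homL[OF C i W])
  also have "\<dots> = ?R" by (rule le_antisym[OF 1 2])
  also have "\<dots> = qinf Q (cext C Z) (cext C W) {qlimp Q (chom C (F X) W) (chom C (F X) Z) | X. X \<in> cob E}"
    unfolding eZ by (intro arg_cong[where f="qinf Q T (cext C W)"] setcong) (simp add: iso_homR[OF C i FX])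
  finally show ?thesis .
qed

lemma codensity_formula:
  assumes C: "qcategory Q C" and G: "qfunctor Q D C G" and cd: "codense Q D C G"
  and Z: "Z \<in> cob C" and W: "W \<in> cob C"
  shows "chom C W Z = qinf Q (cext C W) (cext C Z)
     {qrimp Q (chom C Z (G Y)) (chom C W (G Y)) | Y. Y \<in> cob D}"
proof -
  obtain T \<psi> Z' where P: "covpresheaf Q D T \<psi>" and cl: "is_wlim Q D C G T \<psi> Z'" and i: "qiso Q C Z Z'"
    using cd Z unfolding codense_def by blast
  have Z': "Z' \<in> cob C" and eT: "cext C Z' = T"
    and lim: "\<And>W. W \<in> cob C \<Longrightarrow> chom C W Z' = qinf Q (cext C W) T {qrimp Q (\<psi> Y) (chom C W (G Y)) | Y. Y \<in> cob D}"
    using cl unfolding is_wlim_def by auto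
  have eZ: "cext C Z = T" using i eT unfolding qiso_def by simp
  have GY: "\<And>Y. Y \<in> cob D \<Longrightarrow> G Y \<in> cob C" using functor_ob[OF G] .
  have GYe: "\<And>Y. Y \<in> cob D \<Longrightarrow> cext C (G Y) = cext D Y" using functor_ext[OF G] .
  have pv: "\<And>Y. Y \<in> cob D \<Longrightarrow> \<psi> Y \<in> qhom Q T (cext D Y)" using P unfolding covpresheaf_def by blast
  have hZG: "\<And>Y. Y \<in> cob D \<Longrightarrow> chom C Z' (G Y) \<in> qhom Q T (cext D Y)"
    using cat_hom[OF C Z' GY] GYe eT by metis
  have hWG: "\<And>Y W. Y \<in> cob D \<Longrightarrow> W \<in> cob C \<Longrightarrow> chom C W (G Y) \<in> qhom Q (cext C W) (cext D Y)"
    using cat_hom[OF C _ GY] GYe by metis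
  have psi_le: "\<psi> Y \<sqsubseteq> chom C Z' (G Y)" if Y: "Y \<in> cob D" for Y
  proof -
    have idl: "qid Q T \<sqsubseteq> chom C Z' Z'" using cat_id[OF C Z'] eT by simp
    have hZZ: "chom C Z' Z' \<in> qhom Q T T" using cat_hom[OF C Z' Z'] eT by simp
    have "\<psi> Y \<sqsubseteq> \<psi> Y \<cdot> chom C Z' Z'"
      by (rule id_le_comp_r[OF idl hZZ pv[OF Y]])
    also have "\<dots> \<sqsubseteq> chom C Z' (G Y)"
      unfolding lim[OF Z'] eT
      by (rule infr_le[where b="cext D"]) (use Y pv hZG in auto)
    finally show ?thesis .
  qed
  let ?R = "qinf Q (cext C W) T {qrimp Q (chom C Z' (G Y)) (chom C W (G Y)) | Y. Y \<in> cob D}"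
  have Rh: "?R \<in> qhom Q (cext C W) T" by (rule inf_hom)
  have WZh: "chom C W Z' \<in> qhom Q (cext C W) T" using cat_hom[OF C W Z'] eT by simp
  have 1: "chom C W Z' \<sqsubseteq> ?R"
    apply (rule infr_greatest[where b="cext D", OF hZG hWG[OF _ W] WZh], assumption, assumption)
    using cat_comp[OF C W Z' GY] .
  have 2: "?R \<sqsubseteq> chom C W Z'"
    unfolding lim[OF W]
  proof (rule infr_greatest[where b="cext D", OF pv hWG[OF _ W] Rh], assumption, assumption)
    fix Y assume Y: "Y \<in> cob D"
    have "\<psi> Y \<cdot> ?R \<sqsubseteq> chom C Z' (G Y) \<cdot> ?R" by (rule mono_r[OF psi_le[OF Y] hZG[OF Y] Rh])
    also have "\<dots> \<sqsubseteq> chom C W (G Y)"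
      by (rule infr_le[where b="cext D", OF hZG hWG[OF _ W]]) (use Y in auto)
    finally show "\<psi> Y \<cdot> ?R \<sqsubseteq> chom C W (G Y)" .
  qed
  have "chom C W Z = chom C W Z'" by (rule iso_homR[OF C i W])
  also have "\<dots> = ?R" by (rule le_antisym[OF 1 2])
  also have "\<dots> = qinf Q (cext C W) (cext C Z) {qrimp Q (chom C Z (G Y)) (chom C W (G Y)) | Y. Y \<in> cob D}"
    unfolding eZ by (intro arg_cong[where f="qinf Q (cext C W) T"] setcong) (simp add: iso_homL[OF C i GY])
  finally show ?thesis .
qed

lemma limit_exists:
  assumes C: "qcategory Q C" and tot: "total Q C"
  and G1: "\<And>Y. Y \<in> cob D \<Longrightarrow> G Y \<in> cob C" and G2: "\<And>Y. Y \<in> cob D \<Longrightarrow> cext C (G Y) = cext D Y"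
  and pv: "\<And>Y. Y \<in> cob D \<Longrightarrow> \<psi> Y \<in> qhom Q T (cext D Y)"
  shows "\<exists>Z\<in>cob C. cext C Z = T \<and> (\<forall>W\<in>cob C. chom C W Z =
     qinf Q (cext C W) T {qrimp Q (\<psi> Y) (chom C W (G Y)) | Y. Y \<in> cob D})"
proof -
  obtain L where adj: "qadjoint Q (PSh Q C) C L (yoneda Q C)" using tot unfolding total_def by blast
  define l where "l = (\<lambda>W. if W \<in> cob C then qinf Q (cext C W) T {qrimp Q (\<psi> Y) (chom C W (G Y)) | Y. Y \<in> cob D} else undefined)"
  have hWG: "\<And>Y W. Y \<in> cob D \<Longrightarrow> W \<in> cob C \<Longrightarrow> chom C W (G Y) \<in> qhom Q (cext C W) (cext D Y)"
    using cat_hom[OF C _ G1] G2 by metis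
  have lh: "\<And>W. W \<in> cob C \<Longrightarrow> l W \<in> qhom Q (cext C W) T" unfolding l_def by (simp add: inf_hom)
  have lle: "\<And>W Y. W \<in> cob C \<Longrightarrow> Y \<in> cob D \<Longrightarrow> \<psi> Y \<cdot> l W \<sqsubseteq> chom C W (G Y)"
    unfolding l_def by (simp, rule infr_le[where b="cext D"]) (use pv hWG in auto)
  have lgr: "\<And>W a. W \<in> cob C \<Longrightarrow> a \<in> qhom Q (cext C W) T \<Longrightarrow> (\<And>Y. Y \<in> cob D \<Longrightarrow> \<psi> Y \<cdot> a \<sqsubseteq> chom C W (G Y)) \<Longrightarrow> a \<sqsubseteq> l W"
    unfolding l_def by (simp, rule infr_greatest[where b="cext D"]) (use pv hWG in auto)
  have P: "presheaf Q C T l"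
    unfolding presheaf_def
  proof (intro conjI ballI allI impI)
    fix W assume "W \<in> cob C" then show "l W \<in> qhom Q (cext C W) T" by (rule lh)
  next
    fix W assume "W \<notin> cob C" then show "l W = undefined" by (simp add: l_def)
  next
    fix W W' assume W: "W \<in> cob C" and W': "W' \<in> cob C"
    show "l W \<cdot> chom C W' W \<sqsubseteq> l W'"
    proof (rule lgr[OF W' comp_hom[OF cat_hom[OF C W' W] lh[OF W]]])
      fix Y assume Y: "Y \<in> cob D"
      have "\<psi> Y \<cdot> (l W \<cdot> chom C W' W) = (\<psi> Y \<cdot> l W) \<cdot> chom C W' W"
        by (rule assoc[OF cat_hom[OF C W' W] lh[OF W] pv[OF Y]])
      also have "\<dots> \<sqsubseteq> chom C W (G Y) \<cdot> chom C W' W"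
        by (rule mono_r[OF lle[OF W Y] hWG[OF Y W] cat_hom[OF C W' W]])
      also have "\<dots> \<sqsubseteq> chom C W' (G Y)" by (rule cat_comp[OF C W' W G1[OF Y]])
      finally show "\<psi> Y \<cdot> (l W \<cdot> chom C W' W) \<sqsubseteq> chom C W' (G Y)" .
    qed
  qed
  have pin: "(l,T) \<in> cob (PSh Q C)" using P by (simp add: PSh_def)
  have LF: "qfunctor Q (PSh Q C) C L" and adjeq: "\<And>W. W \<in> cob C \<Longrightarrow> chom C (L (l,T)) W = chom (PSh Q C) (l,T) (yoneda Q C W)"
    using adj pin unfolding qadjoint_def by auto
  define Z where "Z = L (l,T)"
  have Z: "Z \<in> cob C" unfolding Z_def using functor_ob[OF LF pin] .
  have eZ: "cext C Z = T" unfolding Z_def using functor_ext[OF LF pin] by (simp add: PSh_def)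
  have ZW: "\<And>W. W \<in> cob C \<Longrightarrow> chom C Z W = psh_hom Q C (l,T) (fst (yoneda Q C W), cext C W)"
    using adjeq unfolding Z_def by (simp add: PSh_def yoneda_def)
  have yv: "\<And>W W'. W \<in> cob C \<Longrightarrow> W' \<in> cob C \<Longrightarrow> fst (yoneda Q C W) W' = chom C W' W"
    by (simp add: yoneda_def)
  have main: "chom C W Z = l W" if W: "W \<in> cob C" for W
  proof -
    have WZ: "chom C W Z \<in> qhom Q (cext C W) T" using cat_hom[OF C W Z] eZ by simp
    have 1: "l W \<sqsubseteq> chom C W Z"
    proof -
      have idl: "qid Q T \<sqsubseteq> chom C Z Z" using cat_id[OF C Z] eZ by simp
      have hZZ: "chom C Z Z \<in> qhom Q T T" using cat_hom[OF C Z Z] eZ by simp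
      have "l W \<sqsubseteq> chom C Z Z \<cdot> l W" by (rule id_le_comp_l[OF idl hZZ lh[OF W]])
      also have "\<dots> \<sqsubseteq> chom C W Z"
        using psh_hom_le[OF P yoneda_psh[OF C Z] W] unfolding ZW[OF Z] yv[OF Z W] eZ .
      finally show ?thesis .
    qed
    have 2: "chom C W Z \<sqsubseteq> l W"
    proof (rule lgr[OF W WZ])
      fix Y assume Y: "Y \<in> cob D"
      have ZG: "chom C Z (G Y) \<in> qhom Q T (cext D Y)" using cat_hom[OF C Z G1[OF Y]] eZ G2[OF Y] by simp
      have "\<psi> Y \<sqsubseteq> chom C Z (G Y)"
        unfolding ZW[OF G1[OF Y]]
      proof (rule psh_hom_greatest[OF P yoneda_psh[OF C G1[OF Y]]])
        show "\<psi> Y \<in> qhom Q T (cext C (G Y))" using pv[OF Y] G2[OF Y] by simp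
        fix W' assume W': "W' \<in> cob C"
        show "\<psi> Y \<cdot> l W' \<sqsubseteq> fst (yoneda Q C (G Y)) W'"
          unfolding yv[OF G1[OF Y] W'] by (rule lle[OF W' Y])
      qed
      then have "\<psi> Y \<cdot> chom C W Z \<sqsubseteq> chom C Z (G Y) \<cdot> chom C W Z"
        by (rule mono_r[OF _ ZG WZ])
      also have "\<dots> \<sqsubseteq> chom C W (G Y)" by (rule cat_comp[OF C W Z G1[OF Y]])
      finally show "\<psi> Y \<cdot> chom C W Z \<sqsubseteq> chom C W (G Y)" .
    qed
    show ?thesis by (rule le_antisym[OF 2 1])
  qed
  show ?thesis using Z eZ main by (auto simp: l_def)
qed

lemma converse:
  assumes C: "qcategory Q C" and tot: "total Q C" and F: "qfunctor Q E C F" and G: "qfunctor Q D C G"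
  and eq: "\<forall>X\<in>cob E. \<forall>Y\<in>cob D. \<Phi> X Y = chom C (F X) (G Y)"
  and dn: "dense Q E C F" and cd: "codense Q D C G"
  shows "\<exists>H. qequivalence Q C IB H"
proof -
  define h where "h Z = (\<lambda>X. if X \<in> cob E then chom C (F X) Z else undefined)" for Z
  define H where "H Z = (h Z, cext C Z)" for Z
  have FX: "\<And>X. X \<in> cob E \<Longrightarrow> F X \<in> cob C" using functor_ob[OF F] .
  have FXe: "\<And>X. X \<in> cob E \<Longrightarrow> cext C (F X) = cext E X" using functor_ext[OF F] .
  have GY: "\<And>Y. Y \<in> cob D \<Longrightarrow> G Y \<in> cob C" using functor_ob[OF G] .
  have GYe: "\<And>Y. Y \<in> cob D \<Longrightarrow> cext C (G Y) = cext D Y" using functor_ext[OF G] .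
  have hP: "presheaf Q E (cext C Z) (h Z)" if Z: "Z \<in> cob C" for Z
    unfolding presheaf_def
  proof (intro conjI ballI allI impI)
    fix X assume X: "X \<in> cob E"
    then show "h Z X \<in> qhom Q (cext E X) (cext C Z)" using cat_hom[OF C FX[OF X] Z] FXe[OF X] by (simp add: h_def)
  next
    fix X assume "X \<notin> cob E" then show "h Z X = undefined" by (simp add: h_def)
  next
    fix X X' assume X: "X \<in> cob E" and X': "X' \<in> cob E"
    have "chom C (F X) Z \<cdot> chom E X' X \<sqsubseteq> chom C (F X) Z \<cdot> chom C (F X') (F X)"
      apply (rule mono_l[OF functor_le[OF F X' X]])
      using cat_hom[OF C FX[OF X'] FX[OF X]] cat_hom[OF C FX[OF X] Z] FXe X X' by auto
    also have "\<dots> \<sqsubseteq> chom C (F X') Z" by (rule cat_comp[OF C FX[OF X'] FX[OF X] Z])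
    finally show "h Z X \<cdot> chom E X' X \<sqsubseteq> h Z X'" using X X' by (simp add: h_def)
  qed
  have uph: "up (cext C Z) (h Z) Y = chom C Z (G Y)" if Z: "Z \<in> cob C" and Y: "Y \<in> cob D" for Z Y
  proof -
    have "up (cext C Z) (h Z) Y = qinf Q (cext C Z) (cext D Y) {qlimp Q (\<Phi> X Y) (h Z X) | X. X \<in> cob E}"
      by (rule up_eq[OF Y])
    also have "\<dots> = qinf Q (cext C Z) (cext C (G Y)) {qlimp Q (chom C (F X) (G Y)) (chom C (F X) Z) | X. X \<in> cob E}"
      unfolding GYe[OF Y] by (intro arg_cong[where f="qinf Q (cext C Z) (cext D Y)"] setcong) (simp add: h_def eq Y)
    also have "\<dots> = chom C Z (G Y)" by (rule density_formula[OF C F dn Z GY[OF Y], symmetric])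
    finally show ?thesis .
  qed
  have hcl: "cl (cext C Z) (h Z) = h Z" if Z: "Z \<in> cob C" for Z
  proof
    fix X show "cl (cext C Z) (h Z) X = h Z X"
    proof (cases "X \<in> cob E")
      case False then show ?thesis by (simp add: down_undef h_def)
    next
      case X: True
      have "cl (cext C Z) (h Z) X = qinf Q (cext E X) (cext C Z) {qrimp Q (up (cext C Z) (h Z) Y) (\<Phi> X Y) | Y. Y \<in> cob D}"
        by (rule down_eq[OF X])
      also have "\<dots> = qinf Q (cext C (F X)) (cext C Z) {qrimp Q (chom C Z (G Y)) (chom C (F X) (G Y)) | Y. Y \<in> cob D}"
        unfolding FXe[OF X] by (intro arg_cong[where f="qinf Q (cext E X) (cext C Z)"] setcong) (simp add: uph[OF Z] eq X)
      also have "\<dots> = chom C (F X) Z" by (rule codensity_formula[OF C G cd Z FX[OF X], symmetric])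
      finally show ?thesis using X by (simp add: h_def)
    qed
  qed
  have HI: "H Z \<in> cob IB" if Z: "Z \<in> cob C" for Z
    unfolding H_def isbell_iff using hP[OF Z] hcl[OF Z] by simp
  have ff: "chom IB (H Z) (H W) = chom C Z W" if Z: "Z \<in> cob C" and W: "W \<in> cob C" for Z W
  proof -
    have "chom IB (H Z) (H W) = qinf Q (cext C Z) (cext C W) {qlimp Q (h W X) (h Z X) | X. X \<in> cob E}"
      unfolding isbell_hom H_def psh_hom_eq ..
    also have "\<dots> = qinf Q (cext C Z) (cext C W) {qlimp Q (chom C (F X) W) (chom C (F X) Z) | X. X \<in> cob E}"
      by (intro arg_cong[where f="qinf Q (cext C Z) (cext C W)"] setcong) (simp add: h_def)
    also have "\<dots> = chom C Z W" by (rule density_formula[OF C F dn Z W, symmetric])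
    finally show ?thesis .
  qed
  have HF: "qfunctor Q C IB H"
    unfolding qfunctor_def
    using HI ff le_refl by (simp add: isbell_ext H_def)
  have es: "\<exists>Z\<in>cob C. qiso Q IB (H Z) p" if p: "p \<in> cob IB" for p
  proof -
    obtain \<phi> T where pe: "p = (\<phi>,T)" by (cases p)
    have P: "presheaf Q E T \<phi>" and cp: "cl T \<phi> = \<phi>" using p pe isbell_iff by auto
    have "\<exists>Z\<in>cob C. cext C Z = T \<and> (\<forall>W\<in>cob C. chom C W Z =
     qinf Q (cext C W) T {qrimp Q (up T \<phi> Y) (chom C W (G Y)) | Y. Y \<in> cob D})"
      apply (rule limit_exists[OF C tot])
        apply (erule GY) apply (erule GYe) by (erule up_hom)
    then obtain Z where Z: "Z \<in> cob C" and eZ: "cext C Z = T" and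
      lim: "\<And>W. W \<in> cob C \<Longrightarrow> chom C W Z = qinf Q (cext C W) T {qrimp Q (up T \<phi> Y) (chom C W (G Y)) | Y. Y \<in> cob D}"
      by blast
    have "h Z = \<phi>"
    proof
      fix X show "h Z X = \<phi> X"
      proof (cases "X \<in> cob E")
        case False then show ?thesis using psh_undef[OF P False] by (simp add: h_def)
      next
        case X: True
        have "h Z X = qinf Q (cext C (F X)) T {qrimp Q (up T \<phi> Y) (chom C (F X) (G Y)) | Y. Y \<in> cob D}"
          using lim[OF FX[OF X]] X by (simp add: h_def)
        also have "\<dots> = cl T \<phi> X"
          unfolding down_eq[OF X] FXe[OF X]
          by (intro arg_cong[where f="qinf Q (cext E X) T"] setcong) (simp add: eq X)
        finally show ?thesis using cp by simp
      qed
    qed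
    then have "H Z = p" using pe eZ H_def by simp
    then show ?thesis using Z iso_refl[OF isbell_cat HI[OF Z]] by auto
  qed
  have "qequivalence Q C IB H"
    unfolding qequivalence_def using HF ff es by auto
  then show ?thesis by blast
qed

end



context qdist begin

lemma forward:
  assumes C: "qcategory Q C" and eqv: "qequivalence Q C IB H"
  shows "total Q C \<and>
     (\<exists>F G. qfunctor Q E C F \<and> qfunctor Q D C G \<and>
        (\<forall>X\<in>cob E. \<forall>Y\<in>cob D. \<Phi> X Y = chom C (F X) (G Y)) \<and>
        dense Q E C F \<and> codense Q D C G)"
proof -
  have HF: "qfunctor Q C IB H" and ff0: "\<And>Z W. Z \<in> cob C \<Longrightarrow> W \<in> cob C \<Longrightarrow> chom IB (H Z) (H W) = chom C Z W"
    and es: "\<And>p. p \<in> cob IB \<Longrightarrow> \<exists>Z\<in>cob C. qiso Q IB (H Z) p"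
    using eqv unfolding qequivalence_def by auto
  have IBc: "qcategory Q IB" by (rule isbell_cat)
  define h where "h Z = fst (H Z)" for Z
  have HI: "\<And>Z. Z \<in> cob C \<Longrightarrow> H Z \<in> cob IB" using functor_ob[OF HF] .
  have He: "\<And>Z. Z \<in> cob C \<Longrightarrow> H Z = (h Z, cext C Z)"
    using functor_ext[OF HF] unfolding h_def isbell_ext by (metis prod.collapse)
  have hI: "\<And>Z. Z \<in> cob C \<Longrightarrow> (h Z, cext C Z) \<in> cob IB" using HI He by metis
  have hP: "\<And>Z. Z \<in> cob C \<Longrightarrow> presheaf Q E (cext C Z) (h Z)" using hI isbell_iff by blast
  have hcl: "\<And>Z. Z \<in> cob C \<Longrightarrow> cl (cext C Z) (h Z) = h Z" using hI isbell_iff by blast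
  have ff: "\<And>Z W. Z \<in> cob C \<Longrightarrow> W \<in> cob C \<Longrightarrow> psh_hom Q E (h Z, cext C Z) (h W, cext C W) = chom C Z W"
    using ff0 He isbell_hom by metis
  define R where "R p = (SOME Z. Z \<in> cob C \<and> qiso Q IB (H Z) p)" for p
  have R: "R p \<in> cob C \<and> qiso Q IB (H (R p)) p" if "p \<in> cob IB" for p
    unfolding R_def using es[OF that] by (rule someI2_bex) auto
  have Re: "cext C (R p) = snd p" if p: "p \<in> cob IB" for p
  proof -
    have "cext IB (H (R p)) = cext IB p" using R[OF p] unfolding qiso_def by simp
    then show ?thesis using functor_ext[OF HF] R[OF p] isbell_ext by simp
  qed
  define y where "y X = fst (yoneda Q E X)" for X
  have yP: "\<And>X. X \<in> cob E \<Longrightarrow> presheaf Q E (cext E X) (y X)" unfolding y_def by (rule yoneda_psh[OF E])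
  have ye: "\<And>X. yoneda Q E X = (y X, cext E X)" unfolding y_def yoneda_def by simp
  define F where "F X = R (cl (cext E X) (y X), cext E X)" for X
  define G where "G Y = R (col Y, cext D Y)" for Y
  have yI: "\<And>X. X \<in> cob E \<Longrightarrow> (cl (cext E X) (y X), cext E X) \<in> cob IB" using cl_isbell yP by blast
  have FX: "\<And>X. X \<in> cob E \<Longrightarrow> F X \<in> cob C" and Fi: "\<And>X. X \<in> cob E \<Longrightarrow> qiso Q IB (H (F X)) (cl (cext E X) (y X), cext E X)"
    unfolding F_def using R yI by auto
  have FXe: "\<And>X. X \<in> cob E \<Longrightarrow> cext C (F X) = cext E X" unfolding F_def using Re yI by simp
  have GY: "\<And>Y. Y \<in> cob D \<Longrightarrow> G Y \<in> cob C" and Gi: "\<And>Y. Y \<in> cob D \<Longrightarrow> qiso Q IB (H (G Y)) (col Y, cext D Y)"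
    unfolding G_def using R col_isbell by auto
  have GYe: "\<And>Y. Y \<in> cob D \<Longrightarrow> cext C (G Y) = cext D Y" unfolding G_def using Re col_isbell by simp
  have Fhom_gen: "chom C (F X) W = psh_hom Q E (y X, cext E X) p'" if X: "X \<in> cob E" and W: "W \<in> cob C"
    and p': "p' \<in> cob IB" and iW: "qiso Q IB (H W) p'" for X W p'
  proof -
    obtain \<psi> T' where pe: "p' = (\<psi>, T')" by (cases p')
    have "chom C (F X) W = chom IB (H (F X)) (H W)" using ff0[OF FX[OF X] W] by simp
    also have "\<dots> = chom IB (cl (cext E X) (y X), cext E X) (H W)"
      by (rule iso_homL[OF IBc Fi[OF X] HI[OF W]])
    also have "\<dots> = chom IB (cl (cext E X) (y X), cext E X) p'"
      by (rule iso_homR[OF IBc iW yI[OF X]])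
    also have "\<dots> = psh_hom Q E (y X, cext E X) p'"
      unfolding isbell_hom pe by (rule closed_target[OF yP[OF X]]) (use p' pe in simp)
    finally show ?thesis .
  qed
  have FW: "chom C (F X) W = h W X" if X: "X \<in> cob E" and W: "W \<in> cob C" for X W
    using Fhom_gen[OF X W hI[OF W]] iso_refl[OF IBc hI[OF W]] He[OF W] yoneda_lemma[OF E X hP[OF W]] ye by simp
  have FG: "chom C (F X) (G Y) = \<Phi> X Y" if X: "X \<in> cob E" and Y: "Y \<in> cob D" for X Y
  proof -
    have "chom C (F X) (G Y) = psh_hom Q E (y X, cext E X) (col Y, cext D Y)"
      by (rule Fhom_gen[OF X GY[OF Y] col_isbell[OF Y] Gi[OF Y]])
    also have "\<dots> = col Y X" using yoneda_lemma[OF E X col_psh[OF Y]] ye by simp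
    finally show ?thesis using X by (simp add: col_def)
  qed
  have WG: "chom C W (G Y) = up (cext C W) (h W) Y" if W: "W \<in> cob C" and Y: "Y \<in> cob D" for W Y
  proof -
    have "chom C W (G Y) = chom IB (H W) (H (G Y))" using ff0[OF W GY[OF Y]] by simp
    also have "\<dots> = chom IB (H W) (col Y, cext D Y)" by (rule iso_homR[OF IBc Gi[OF Y] HI[OF W]])
    also have "\<dots> = qinf Q (cext C W) (cext D Y) {qlimp Q (col Y X) (h W X) | X. X \<in> cob E}"
      unfolding isbell_hom He[OF W] psh_hom_eq ..
    also have "\<dots> = up (cext C W) (h W) Y"
      unfolding up_eq[OF Y] by (intro arg_cong[where f="qinf Q (cext C W) (cext D Y)"] setcong) (simp add: col_def)
    finally show ?thesis .
  qed
  have Ff: "qfunctor Q E C F"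
    unfolding qfunctor_def
  proof (intro conjI ballI)
    fix X assume X: "X \<in> cob E"
    show "F X \<in> cob C" by (rule FX[OF X])
    show "cext C (F X) = cext E X" by (rule FXe[OF X])
  next
    fix X X' assume X: "X \<in> cob E" and X': "X' \<in> cob E"
    have "chom C (F X) (F X') = psh_hom Q E (y X, cext E X) (cl (cext E X') (y X'), cext E X')"
      by (rule Fhom_gen[OF X FX[OF X'] yI[OF X'] Fi[OF X']])
    also have "\<dots> = cl (cext E X') (y X') X" using yoneda_lemma[OF E X cl_psh[OF yP[OF X']]] ye by simp
    finally have eq: "chom C (F X) (F X') = cl (cext E X') (y X') X" .
    have "chom E X X' = y X' X" using X unfolding y_def yoneda_def by simp
    then show "chom E X X' \<sqsubseteq> chom C (F X) (F X')" unfolding eq using cl_ge[OF yP[OF X'] X] by simp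
  qed
  have Gf: "qfunctor Q D C G"
    unfolding qfunctor_def
  proof (intro conjI ballI)
    fix Y assume Y: "Y \<in> cob D"
    show "G Y \<in> cob C" by (rule GY[OF Y])
    show "cext C (G Y) = cext D Y" by (rule GYe[OF Y])
  next
    fix Y Y' assume Y: "Y \<in> cob D" and Y': "Y' \<in> cob D"
    have "chom C (G Y) (G Y') = chom IB (H (G Y)) (H (G Y'))" using ff0[OF GY[OF Y] GY[OF Y']] by simp
    also have "\<dots> = chom IB (col Y, cext D Y) (H (G Y'))" by (rule iso_homL[OF IBc Gi[OF Y] HI[OF GY[OF Y']]])
    also have "\<dots> = chom IB (col Y, cext D Y) (col Y', cext D Y')" by (rule iso_homR[OF IBc Gi[OF Y'] col_isbell[OF Y]])
    finally have eq: "chom C (G Y) (G Y') = psh_hom Q E (col Y, cext D Y) (col Y', cext D Y')" by (simp add: isbell_hom)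
    show "chom D Y Y' \<sqsubseteq> chom C (G Y) (G Y')" unfolding eq
    proof (rule psh_hom_greatest[OF col_psh[OF Y] col_psh[OF Y'] cat_hom[OF D Y Y']])
      fix X assume X: "X \<in> cob E"
      show "chom D Y Y' \<cdot> col Y X \<sqsubseteq> col Y' X" using Phi_left[OF X Y Y'] X by (simp add: col_def)
    qed
  qed
  have eqPhi: "\<forall>X\<in>cob E. \<forall>Y\<in>cob D. \<Phi> X Y = chom C (F X) (G Y)" using FG by simp
  have dn: "dense Q E C F"
    unfolding dense_def
  proof
    fix Z assume Z: "Z \<in> cob C"
    have "is_wcolim Q E C F (cext C Z) (h Z) Z"
      unfolding is_wcolim_def
    proof (intro conjI ballI Z refl)
      fix W assume W: "W \<in> cob C"
      have "chom C Z W = qinf Q (cext C Z) (cext C W) {qlimp Q (h W X) (h Z X) | X. X \<in> cob E}"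
        using ff[OF Z W] psh_hom_eq by metis
      also have "\<dots> = qinf Q (cext C Z) (cext C W) {qlimp Q (chom C (F X) W) (h Z X) | X. X \<in> cob E}"
        by (intro arg_cong[where f="qinf Q (cext C Z) (cext C W)"] setcong) (simp add: FW[OF _ W])
      finally show "chom C Z W = qinf Q (cext C Z) (cext C W) {qlimp Q (chom C (F X) W) (h Z X) | X. X \<in> cob E}" .
    qed
    then show "\<exists>T \<phi> Z'. presheaf Q E T \<phi> \<and> is_wcolim Q E C F T \<phi> Z' \<and> qiso Q C Z Z'"
      using hP[OF Z] iso_refl[OF C Z] by blast
  qed
  have cd: "codense Q D C G"
    unfolding codense_def
  proof
    fix Z assume Z: "Z \<in> cob C"
    have "is_wlim Q D C G (cext C Z) (up (cext C Z) (h Z)) Z"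
      unfolding is_wlim_def
    proof (intro conjI ballI Z refl)
      fix W assume W: "W \<in> cob C"
      have "chom C W Z = psh_hom Q E (h W, cext C W) (h Z, cext C Z)" using ff[OF W Z] by simp
      also have "\<dots> = qinf Q (cext C W) (cext C Z) {qrimp Q (up (cext C Z) (h Z) Y) (up (cext C W) (h W) Y) | Y. Y \<in> cob D}"
        by (rule hom_via_up[OF hP[OF W] hI[OF Z]])
      also have "\<dots> = qinf Q (cext C W) (cext C Z) {qrimp Q (up (cext C Z) (h Z) Y) (chom C W (G Y)) | Y. Y \<in> cob D}"
        by (intro arg_cong[where f="qinf Q (cext C W) (cext C Z)"] setcong) (simp add: WG[OF W])
      finally show "chom C W Z = qinf Q (cext C W) (cext C Z) {qrimp Q (up (cext C Z) (h Z) Y) (chom C W (G Y)) | Y. Y \<in> cob D}" .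
    qed
    then show "\<exists>T \<psi> Z'. covpresheaf Q D T \<psi> \<and> is_wlim Q D C G T \<psi> Z' \<and> qiso Q C Z Z'"
      using up_covpsh[OF hP[OF Z]] iso_refl[OF C Z] by blast
  qed
  have tot: "total Q C"
  proof -
    define \<sigma> where "\<sigma> l T = (\<lambda>X. if X \<in> cob E then qsup Q (cext E X) T {l W \<cdot> h W X | W. W \<in> cob C} else undefined)" for l T
    define L where "L p = R (cl (snd p) (\<sigma> (fst p) (snd p)), snd p)" for p
    have hv: "h W X \<in> qhom Q (cext E X) (cext C W)" if "W \<in> cob C" "X \<in> cob E" for W X
      using psh_val[OF hP[OF that(1)] that(2)] .
    have Sh: "{l W \<cdot> h W X | W. W \<in> cob C} \<subseteq> qhom Q (cext E X) T"
      if P: "presheaf Q C T l" and X: "X \<in> cob E" for l T X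
    proof
      fix s assume "s \<in> {l W \<cdot> h W X | W. W \<in> cob C}"
      then obtain W where W: "W \<in> cob C" and se: "s = l W \<cdot> h W X" by blast
      show "s \<in> qhom Q (cext E X) T" unfolding se by (rule comp_hom[OF hv[OF W X] psh_val[OF P W]])
    qed
    have sig_up: "l W \<cdot> h W X \<sqsubseteq> \<sigma> l T X"
      if P: "presheaf Q C T l" and X: "X \<in> cob E" and W: "W \<in> cob C" for l T X W
    proof -
      have "l W \<cdot> h W X \<in> {l W \<cdot> h W X | W. W \<in> cob C}" using W by blast
      then show ?thesis using sup_upper[OF Sh[OF P X]] X by (simp add: \<sigma>_def)
    qed
    have sigP: "presheaf Q E T (\<sigma> l T)" if P: "presheaf Q C T l" for l T
      unfolding presheaf_def
    proof (intro conjI ballI allI impI)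
      fix X assume X: "X \<in> cob E"
      show "\<sigma> l T X \<in> qhom Q (cext E X) T" using sup_hom[OF Sh[OF P X]] X by (simp add: \<sigma>_def)
    next
      fix X assume "X \<notin> cob E" then show "\<sigma> l T X = undefined" by (simp add: \<sigma>_def)
    next
      fix X X' assume X: "X \<in> cob E" and X': "X' \<in> cob E"
      have eqs: "\<sigma> l T X \<cdot> chom E X' X = qsup Q (cext E X') T ((\<lambda>g. g \<cdot> chom E X' X) ` {l W \<cdot> h W X | W. W \<in> cob C})"
        using comp_sup_r[OF cat_hom[OF E X' X] Sh[OF P X]] X by (simp add: \<sigma>_def)
      have sh': "\<sigma> l T X' \<in> qhom Q (cext E X') T" using sup_hom[OF Sh[OF P X']] X' by (simp add: \<sigma>_def)
      show "\<sigma> l T X \<cdot> chom E X' X \<sqsubseteq> \<sigma> l T X'"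
        unfolding eqs
      proof (rule sup_least[OF _ sh'])
        show "(\<lambda>g. g \<cdot> chom E X' X) ` {l W \<cdot> h W X |W. W \<in> cob C} \<subseteq> qhom Q (cext E X') T"
          using Sh[OF P X] comp_hom[OF cat_hom[OF E X' X]] by blast
        fix s assume "s \<in> (\<lambda>g. g \<cdot> chom E X' X) ` {l W \<cdot> h W X |W. W \<in> cob C}"
        then obtain W where W: "W \<in> cob C" and se: "s = (l W \<cdot> h W X) \<cdot> chom E X' X" by blast
        have "s = l W \<cdot> (h W X \<cdot> chom E X' X)"
          unfolding se by (rule assoc[OF cat_hom[OF E X' X] hv[OF W X] psh_val[OF P W], symmetric])
        also have "\<dots> \<sqsubseteq> l W \<cdot> h W X'"
          by (rule mono_l[OF psh_comp[OF hP[OF W] X X'] hv[OF W X'] psh_val[OF P W]])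
        also have "\<dots> \<sqsubseteq> \<sigma> l T X'" by (rule sig_up[OF P X' W])
        finally show "s \<sqsubseteq> \<sigma> l T X'" .
      qed
    qed
    have yC: "\<And>W. yoneda Q C W = (fst (yoneda Q C W), cext C W)" unfolding yoneda_def by simp
    have yv: "\<And>W W'. W' \<in> cob C \<Longrightarrow> fst (yoneda Q C W) W' = chom C W' W" by (simp add: yoneda_def)
    have key: "psh_hom Q E (\<sigma> l T, T) (h W, cext C W) = psh_hom Q C (l,T) (yoneda Q C W)"
      if P: "presheaf Q C T l" and W: "W \<in> cob C" for l T W
    proof -
      let ?a = "psh_hom Q E (\<sigma> l T, T) (h W, cext C W)"
      let ?b = "psh_hom Q C (l,T) (fst (yoneda Q C W), cext C W)"
      have SP: "presheaf Q E T (\<sigma> l T)" by (rule sigP[OF P])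
      have YP: "presheaf Q C (cext C W) (fst (yoneda Q C W))" by (rule yoneda_psh[OF C W])
      have 1: "?a \<sqsubseteq> ?b"
      proof (rule psh_hom_greatest[OF P YP psh_hom_hom])
        fix W' assume W': "W' \<in> cob C"
        show "?a \<cdot> l W' \<sqsubseteq> fst (yoneda Q C W) W'"
          unfolding yv[OF W'] ff[OF W' W, symmetric]
        proof (rule psh_hom_greatest[OF hP[OF W'] hP[OF W] comp_hom[OF psh_val[OF P W'] psh_hom_hom]])
          fix X assume X: "X \<in> cob E"
          have "(?a \<cdot> l W') \<cdot> h W' X = ?a \<cdot> (l W' \<cdot> h W' X)"
            by (rule assoc[OF hv[OF W' X] psh_val[OF P W'] psh_hom_hom, symmetric])
          also have "\<dots> \<sqsubseteq> ?a \<cdot> \<sigma> l T X"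
            by (rule mono_l[OF sig_up[OF P X W'] psh_val[OF SP X] psh_hom_hom])
          also have "\<dots> \<sqsubseteq> h W X" by (rule psh_hom_le[OF SP hP[OF W] X])
          finally show "(?a \<cdot> l W') \<cdot> h W' X \<sqsubseteq> h W X" .
        qed
      qed
      have 2: "?b \<sqsubseteq> ?a"
      proof (rule psh_hom_greatest[OF SP hP[OF W] psh_hom_hom])
        fix X assume X: "X \<in> cob E"
        have eqs: "?b \<cdot> \<sigma> l T X = qsup Q (cext E X) (cext C W) ((\<lambda>g. ?b \<cdot> g) ` {l W' \<cdot> h W' X | W'. W' \<in> cob C})"
          using comp_sup_l[OF psh_hom_hom Sh[OF P X]] X by (simp add: \<sigma>_def)
        show "?b \<cdot> \<sigma> l T X \<sqsubseteq> h W X"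
          unfolding eqs
        proof (rule sup_least[OF _ hv[OF W X]])
          show "(\<lambda>g. ?b \<cdot> g) ` {l W' \<cdot> h W' X |W'. W' \<in> cob C} \<subseteq> qhom Q (cext E X) (cext C W)"
          proof
            fix s assume "s \<in> (\<lambda>g. ?b \<cdot> g) ` {l W' \<cdot> h W' X |W'. W' \<in> cob C}"
            then obtain t where t: "t \<in> {l W' \<cdot> h W' X |W'. W' \<in> cob C}" and se: "s = ?b \<cdot> t" by blast
            show "s \<in> qhom Q (cext E X) (cext C W)" unfolding se
              by (rule comp_hom[OF subsetD[OF Sh[OF P X] t] psh_hom_hom])
          qed
          fix s assume "s \<in> (\<lambda>g. ?b \<cdot> g) ` {l W' \<cdot> h W' X |W'. W' \<in> cob C}"
          then obtain W' where W': "W' \<in> cob C" and se: "s = ?b \<cdot> (l W' \<cdot> h W' X)" by blast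
          have "s = (?b \<cdot> l W') \<cdot> h W' X"
            unfolding se by (rule assoc[OF hv[OF W' X] psh_val[OF P W'] psh_hom_hom])
          also have "\<dots> \<sqsubseteq> chom C W' W \<cdot> h W' X"
          proof -
            have bl: "?b \<cdot> l W' \<sqsubseteq> chom C W' W" using psh_hom_le[OF P YP W'] yv[OF W'] by simp
            show ?thesis by (rule mono_r[OF bl cat_hom[OF C W' W] hv[OF W' X]])
          qed
          also have "\<dots> \<sqsubseteq> h W X"
            using psh_hom_le[OF hP[OF W'] hP[OF W] X] ff[OF W' W] by simp
          finally show "s \<sqsubseteq> h W X" .
        qed
      qed
      show ?thesis using le_antisym[OF 1 2] yC[of W] by simp
    qed
    have pin: "\<And>p. p \<in> cob (PSh Q C) \<longleftrightarrow> presheaf Q C (snd p) (fst p)" by (simp add: PSh_def case_prod_beta)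
    have LI: "(cl (snd p) (\<sigma> (fst p) (snd p)), snd p) \<in> cob IB" if "p \<in> cob (PSh Q C)" for p
      using cl_isbell[OF sigP] that pin by blast
    have LC: "L p \<in> cob C" if "p \<in> cob (PSh Q C)" for p
      unfolding L_def using R[OF LI[OF that]] by blast
    have Le: "cext C (L p) = snd p" if "p \<in> cob (PSh Q C)" for p
      unfolding L_def using Re[OF LI[OF that]] by simp
    have Ladj: "chom C (L p) W = psh_hom Q C p (yoneda Q C W)" if p: "p \<in> cob (PSh Q C)" and W: "W \<in> cob C" for p W
    proof -
      obtain l T where pe: "p = (l,T)" by (cases p)
      have P: "presheaf Q C T l" using p pe pin by simp
      have i: "qiso Q IB (H (L p)) (cl T (\<sigma> l T), T)" unfolding L_def pe using R[OF LI[OF p]] pe by simp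
      have "chom C (L p) W = chom IB (H (L p)) (H W)" using ff0[OF LC[OF p] W] by simp
      also have "\<dots> = chom IB (cl T (\<sigma> l T), T) (H W)" by (rule iso_homL[OF IBc i HI[OF W]])
      also have "\<dots> = psh_hom Q E (\<sigma> l T, T) (h W, cext C W)"
        unfolding isbell_hom He[OF W] by (rule closed_target[OF sigP[OF P] hI[OF W]])
      also have "\<dots> = psh_hom Q C p (yoneda Q C W)" unfolding pe by (rule key[OF P W])
      finally show ?thesis .
    qed
    have LF: "qfunctor Q (PSh Q C) C L"
      unfolding qfunctor_def
    proof (intro conjI ballI)
      fix p assume p: "p \<in> cob (PSh Q C)"
      show "L p \<in> cob C" by (rule LC[OF p])
      show "cext C (L p) = cext (PSh Q C) p" using Le[OF p] by (simp add: PSh_def)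
    next
      fix p p' assume p: "p \<in> cob (PSh Q C)" and p': "p' \<in> cob (PSh Q C)"
      obtain l T where pe: "p = (l,T)" by (cases p)
      obtain l' T' where pe': "p' = (l',T')" by (cases p')
      have P: "presheaf Q C T l" using p pe pin by simp
      have P': "presheaf Q C T' l'" using p' pe' pin by simp
      have LC': "L p' \<in> cob C" by (rule LC[OF p'])
      have Le': "cext C (L p') = T'" using Le[OF p'] pe' by simp
      have YP: "presheaf Q C T' (fst (yoneda Q C (L p')))" using yoneda_psh[OF C LC'] Le' by simp
      have yL: "yoneda Q C (L p') = (fst (yoneda Q C (L p')), T')" using yC[of "L p'"] Le' by simp
      have l'le: "l' W \<sqsubseteq> chom C W (L p')" if W: "W \<in> cob C" for W
      proof -
        have idl: "qid Q T' \<sqsubseteq> chom C (L p') (L p')" using cat_id[OF C LC'] Le' by simp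
        have hh: "chom C (L p') (L p') \<in> qhom Q T' T'" using cat_hom[OF C LC' LC'] Le' by simp
        have "l' W \<sqsubseteq> chom C (L p') (L p') \<cdot> l' W" by (rule id_le_comp_l[OF idl hh psh_val[OF P' W]])
        also have "\<dots> \<sqsubseteq> chom C W (L p')"
          using psh_hom_le[OF P' YP W] Ladj[OF p' LC'] yL yv[OF W] pe' by simp
        finally show ?thesis .
      qed
      have "psh_hom Q C (l,T) (l',T') \<sqsubseteq> psh_hom Q C (l,T) (fst (yoneda Q C (L p')), T')"
      proof (rule psh_hom_greatest[OF P YP psh_hom_hom])
        fix W assume W: "W \<in> cob C"
        have "psh_hom Q C (l,T) (l',T') \<cdot> l W \<sqsubseteq> l' W" by (rule psh_hom_le[OF P P' W])
        also have "\<dots> \<sqsubseteq> fst (yoneda Q C (L p')) W" using l'le[OF W] yv[OF W] by simp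
        finally show "psh_hom Q C (l,T) (l',T') \<cdot> l W \<sqsubseteq> fst (yoneda Q C (L p')) W" .
      qed
      then show "chom (PSh Q C) p p' \<sqsubseteq> chom C (L p) (L p')"
        using Ladj[OF p LC'] yL pe pe' by (simp add: PSh_def)
    qed
    have YF: "qfunctor Q C (PSh Q C) (yoneda Q C)"
      unfolding qfunctor_def
    proof (intro conjI ballI)
      fix W assume W: "W \<in> cob C"
      show "yoneda Q C W \<in> cob (PSh Q C)" using yoneda_psh[OF C W] yC[of W] pin by (metis fst_conv snd_conv)
      show "cext (PSh Q C) (yoneda Q C W) = cext C W" by (simp add: PSh_def yoneda_def)
    next
      fix W W' assume W: "W \<in> cob C" and W': "W' \<in> cob C"
      have "chom (PSh Q C) (yoneda Q C W) (yoneda Q C W') = chom C W W'"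
        using yoneda_lemma[OF C W yoneda_psh[OF C W']] yC[of W'] yv[OF W] by (simp add: PSh_def)
      then show "chom C W W' \<sqsubseteq> chom (PSh Q C) (yoneda Q C W) (yoneda Q C W')" using le_refl by simp
    qed
    have "qadjoint Q (PSh Q C) C L (yoneda Q C)"
      unfolding qadjoint_def using LF YF Ladj by (simp add: PSh_def)
    then show ?thesis unfolding total_def by blast
  qed
  show ?thesis using tot Ff Gf eqPhi dn cd by blast
qed

end


theorem theorem9p1:
  fixes Q :: "('o, 'a) quantaloid"
    and E :: "('e, 'o, 'a) qcat" and D :: "('d, 'o, 'a) qcat"
    and C :: "('c, 'o, 'a) qcat"
    and \<Phi> :: "'e \<Rightarrow> 'd \<Rightarrow> 'a"
  assumes "quantaloid Q"
    and "qcategory Q E" and "qcategory Q D" and "qcategory Q C"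
    and "distributor Q E D \<Phi>"
  shows "(\<exists>H. qequivalence Q C (isbell Q E D \<Phi>) H) \<longleftrightarrow>
    (total Q C \<and>
     (\<exists>F G. qfunctor Q E C F \<and> qfunctor Q D C G \<and>
        (\<forall>X\<in>cob E. \<forall>Y\<in>cob D. \<Phi> X Y = chom C (F X) (G Y)) \<and>
        dense Q E C F \<and> codense Q D C G))"
proof -
  interpret qdist Q E D \<Phi>
    using assms by (simp add: qdist_def qtl_def qdist_axioms_def)
  show ?thesis
  proof
    assume "\<exists>H. qequivalence Q C (isbell Q E D \<Phi>) H"
    then obtain H where "qequivalence Q C (isbell Q E D \<Phi>) H" by blast
    then show "total Q C \<and>
     (\<exists>F G. qfunctor Q E C F \<and> qfunctor Q D C G \<and>
        (\<forall>X\<in>cob E. \<forall>Y\<in>cob D. \<Phi> X Y = chom C (F X) (G Y)) \<and>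
        dense Q E C F \<and> codense Q D C G)" by (rule forward[OF assms(4)])
  next
    assume A: "total Q C \<and>
     (\<exists>F G. qfunctor Q E C F \<and> qfunctor Q D C G \<and>
        (\<forall>X\<in>cob E. \<forall>Y\<in>cob D. \<Phi> X Y = chom C (F X) (G Y)) \<and>
        dense Q E C F \<and> codense Q D C G)"
    then obtain F G where "qfunctor Q E C F" "qfunctor Q D C G"
      "\<forall>X\<in>cob E. \<forall>Y\<in>cob D. \<Phi> X Y = chom C (F X) (G Y)" "dense Q E C F" "codense Q D C G" by blast
    then show "\<exists>H. qequivalence Q C (isbell Q E D \<Phi>) H"
      using converse[OF assms(4)] A by blast
  qed
qed

end
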